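(* Let $X$ be a Banach lattice and $(C_n)$ an absolute FDD of $[C_n]\subseteq X$. Then every unconditional and shrinking FDD $(B_n)$ with $[B_n]\subseteq[C_n]$ can be blocked to be absolute.
   Context: An FDD (finite-dimensional decomposition) of a closed subspace $F$ is a sequence $(F_n)$ of finite-dimensional subspaces such that every $x\in F$ has a unique norm-convergent expansion $x=\sum_n x_n$ with $x_n\in F_n$; $[F_n]$ denotes the closed span. In a Banach lattice, an FDD $(F_n)$ is absolute if there is $A\ge1$ with $\|\sum_{n=1}^m|x_n|\|\le A\|\sum_{n=1}^mx_n\|$ for all $m$ and all $x_n\in F_n$. A blocking of $(F_n)$ is a decomposition $(F'_j)$ with $F'_j=F_{k_{j-1}+1}\oplus\cdots\oplus F_{k_j}$ for some $0=k_0<k_1<\cdots$. Unconditional and shrinking have their standard Banach space meaning. *)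

theory Defs
  imports "HOL-Analysis.Analysis"
begin

class banach_lattice = banach + lattice + ordered_real_vector +
  assumes lattice_norm: "sup x (- x) \<le> sup y (- y) \<Longrightarrow> norm x \<le> norm y"

definition labs :: "'a::banach_lattice \<Rightarrow> 'a" where
  "labs x = sup x (- x)"

definition cspan :: "(nat \<Rightarrow> 'a::real_normed_vector set) \<Rightarrow> 'a set" where
  "cspan Fs = closure (span (\<Union>n. Fs n))"

definition fdd_of :: "(nat \<Rightarrow> 'a::real_normed_vector set) \<Rightarrow> 'a set \<Rightarrow> bool" where
  "fdd_of Fs F \<longleftrightarrow> closed F \<and> subspace F \<and>
     (\<forall>n. (\<exists>S. finite S \<and> Fs n = span S) \<and> Fs n \<subseteq> F) \<and>
     (\<forall>x\<in>F. \<exists>!xs. (\<forall>n. xs n \<in> Fs n) \<and> xs sums x)"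

definition is_fdd :: "(nat \<Rightarrow> 'a::real_normed_vector set) \<Rightarrow> bool" where
  "is_fdd Fs \<longleftrightarrow> fdd_of Fs (cspan Fs)"

definition absolute_fdd :: "(nat \<Rightarrow> 'a::banach_lattice set) \<Rightarrow> bool" where
  "absolute_fdd Fs \<longleftrightarrow> is_fdd Fs \<and> (\<exists>A\<ge>1. \<forall>m xs. (\<forall>n. xs n \<in> Fs n) \<longrightarrow>
      norm (\<Sum>n<m. labs (xs n)) \<le> A * norm (\<Sum>n<m. xs n))"

definition unconditional_fdd :: "(nat \<Rightarrow> 'a::real_normed_vector set) \<Rightarrow> bool" where
  "unconditional_fdd Fs \<longleftrightarrow> is_fdd Fs \<and>
     (\<forall>x\<in>cspan Fs. \<forall>xs. (\<forall>n. xs n \<in> Fs n) \<and> xs sums x \<longrightarrow>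
        (\<forall>p. bij p \<longrightarrow> (\<lambda>n. xs (p n)) sums x))"

definition shrinking_fdd :: "(nat \<Rightarrow> 'a::real_normed_vector set) \<Rightarrow> bool" where
  "shrinking_fdd Fs \<longleftrightarrow> is_fdd Fs \<and>
     (\<forall>f::'a \<Rightarrow> real. linear f \<and> (\<exists>K. \<forall>x\<in>cspan Fs. \<bar>f x\<bar> \<le> K * norm x) \<longrightarrow>
        (\<lambda>m. Sup {\<bar>f x\<bar> | x. x \<in> span (\<Union>n\<in>{m..}. Fs n) \<and> norm x \<le> 1})
          \<longlonglongrightarrow> 0)"

text \<open>Blocking of (Fs n) along 0 = k 0 < k 1 < ... (0-based indices):
block j = F_{k j} + ... + F_{k (j+1) - 1}.\<close>
definition blocking :: "(nat \<Rightarrow> 'a::real_normed_vector set) \<Rightarrow> (nat \<Rightarrow> nat) \<Rightarrow> nat \<Rightarrow> 'a set" where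
  "blocking Fs k j = span (\<Union>n\<in>{k j..<k (Suc j)}. Fs n)"

end

theory Submission
  imports Defs
begin

lemma labs_ge: "x \<le> labs x" "- x \<le> labs x"
  by (simp_all add: labs_def)

lemma labs_nonneg: "0 \<le> labs (x::'a::banach_lattice)"
proof -
  have "x + - x \<le> labs x + labs x" using labs_ge by (rule add_mono)
  then have "0 \<le> labs x + labs x" by simp
  then have "0 \<le> (1/2::real) *\<^sub>R (labs x + labs x)" by (intro scaleR_nonneg_nonneg) simp_all
  also have "(1/2::real) *\<^sub>R (labs x + labs x) = labs x"
    by (simp add: scaleR_add_left[symmetric])
  finally show ?thesis .
qed

lemma labs_least: "x \<le> y \<Longrightarrow> - x \<le> y \<Longrightarrow> labs x \<le> y"
  by (simp add: labs_def)

lemma labs_triangle: "labs (x + y) \<le> labs x + labs (y::'a::banach_lattice)"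
  apply (rule labs_least)
  using add_mono[OF labs_ge(1) labs_ge(1), of x y] add_mono[OF labs_ge(2) labs_ge(2), of x y]
  by (simp_all add: add.commute)

lemma labs_neg[simp]: "labs (- x) = labs (x::'a::banach_lattice)"
  by (simp add: labs_def sup_commute)

lemma labs_of_nonneg: "0 \<le> x \<Longrightarrow> labs (x::'a::banach_lattice) = x"
  unfolding labs_def
  by (rule sup_absorb1) (meson neg_le_0_iff_le order_trans)

lemma labs_labs[simp]: "labs (labs x) = labs (x::'a::banach_lattice)"
  by (simp add: labs_of_nonneg labs_nonneg)

lemma labs_zero[simp]: "labs (0::'a::banach_lattice) = 0"
  by (simp add: labs_of_nonneg)

lemma norm_labs[simp]: "norm (labs x) = norm (x::'a::banach_lattice)"
proof -
  have "sup (labs x) (- labs x) = sup x (- x)" using labs_labs[of x] by (simp add: labs_def)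
  then show ?thesis using lattice_norm[of "labs x" x] lattice_norm[of x "labs x"] by simp
qed

lemma norm_mono_pos: "0 \<le> a \<Longrightarrow> a \<le> b \<Longrightarrow> norm a \<le> norm (b::'a::banach_lattice)"
proof -
  assume a: "0 \<le> a" "a \<le> b"
  then have b: "0 \<le> b" by (rule order_trans)
  have "sup a (- a) \<le> sup b (- b)"
    using labs_of_nonneg[OF a(1)] labs_of_nonneg[OF b] a by (simp add: labs_def)
  then show ?thesis by (rule lattice_norm)
qed

lemma labs_sum: "labs (\<Sum>i\<in>I. f i) \<le> (\<Sum>i\<in>I. labs (f i :: 'a::banach_lattice))"
proof (induction I rule: infinite_finite_induct)
  case (insert i I)
  then show ?case using labs_triangle[of "f i" "sum f I"]
    by (simp add: order_trans add_left_mono)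
qed auto

lemma labs_sum_nonneg: "0 \<le> (\<Sum>i\<in>I. labs (f i :: 'a::banach_lattice))"
  by (simp add: sum_nonneg labs_nonneg)

lemma labs_le_sum: "finite I \<Longrightarrow> i \<in> I \<Longrightarrow> labs (f i) \<le> (\<Sum>i\<in>I. labs (f i :: 'a::banach_lattice))"
  using sum.remove[of I i "\<lambda>i. labs (f i)"] labs_sum_nonneg[of f "I - {i}"]
  by (simp add: add_increasing2)

definition coord :: "(nat \<Rightarrow> 'a::real_normed_vector set) \<Rightarrow> 'a \<Rightarrow> nat \<Rightarrow> 'a" where
  "coord Fs x = (THE xs. (\<forall>n. xs n \<in> Fs n) \<and> xs sums x)"

lemma fdd_D:
  assumes "is_fdd Fs"
  shows "closed (cspan Fs)" "subspace (cspan Fs)" "\<And>n. \<exists>S. finite S \<and> Fs n = span S"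
    "\<And>n. Fs n \<subseteq> cspan Fs"
    "\<And>x. x \<in> cspan Fs \<Longrightarrow> \<exists>!xs. (\<forall>n. xs n \<in> Fs n) \<and> xs sums x"
  using assms unfolding is_fdd_def fdd_of_def by blast+

lemma fdd_subspace: "is_fdd Fs \<Longrightarrow> subspace (Fs n)"
  using fdd_D(3) by (metis subspace_span)

lemma cspan_sub: "span (\<Union>n. Fs n) \<subseteq> cspan Fs"
  unfolding cspan_def by (rule closure_subset)

lemma Fs_sub_cspan: "Fs n \<subseteq> cspan Fs"
  using cspan_sub span_superset by blast

lemma sums_in_cspan:
  assumes "\<And>n. xs n \<in> Fs n" "xs sums x"
  shows "x \<in> cspan Fs"
proof -
  have "(\<lambda>m. \<Sum>n<m. xs n) \<longlonglongrightarrow> x" using assms(2) by (simp add: sums_def)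
  moreover have "(\<Sum>n<m. xs n) \<in> span (\<Union>n. Fs n)" for m
    by (intro span_sum) (use assms(1) span_superset in blast)
  ultimately show ?thesis unfolding cspan_def
    by (meson closure_sequential)
qed

lemma coord:
  assumes "is_fdd Fs" "x \<in> cspan Fs"
  shows "coord Fs x n \<in> Fs n" "coord Fs x sums x"
proof -
  have "(\<forall>n. coord Fs x n \<in> Fs n) \<and> coord Fs x sums x"
    unfolding coord_def using fdd_D(5)[OF assms(1,2)] by (rule theI')
  then show "coord Fs x n \<in> Fs n" "coord Fs x sums x" by auto
qed

lemma coord_unique:
  assumes "is_fdd Fs" "\<And>n. xs n \<in> Fs n" "xs sums x"
  shows "coord Fs x = xs"
proof -
  have x: "x \<in> cspan Fs" using sums_in_cspan assms(2,3) by blast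
  show ?thesis unfolding coord_def
    using fdd_D(5)[OF assms(1) x] assms(2,3) by (intro the1_equality) auto
qed

lemma coord_add:
  assumes "is_fdd Fs" "x \<in> cspan Fs" "y \<in> cspan Fs"
  shows "coord Fs (x + y) = (\<lambda>n. coord Fs x n + coord Fs y n)"
  by (rule coord_unique[OF assms(1)])
     (auto intro!: subspace_add[OF fdd_subspace[OF assms(1)]] sums_add coord assms)

lemma coord_scale:
  assumes "is_fdd Fs" "x \<in> cspan Fs"
  shows "coord Fs (c *\<^sub>R x) = (\<lambda>n. c *\<^sub>R coord Fs x n)"
  by (rule coord_unique[OF assms(1)])
     (auto intro!: subspace_scale[OF fdd_subspace[OF assms(1)]] sums_scaleR_right coord assms)

lemma coord_diff:
  assumes "is_fdd Fs" "x \<in> cspan Fs" "y \<in> cspan Fs"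
  shows "coord Fs (x - y) = (\<lambda>n. coord Fs x n - coord Fs y n)"
  by (rule coord_unique[OF assms(1)])
     (auto intro!: subspace_diff[OF fdd_subspace[OF assms(1)]] sums_diff coord assms)

lemma coord_zero:
  assumes "is_fdd Fs" shows "coord Fs 0 = (\<lambda>n. 0)"
  by (rule coord_unique[OF assms(1)]) (auto intro!: subspace_0[OF fdd_subspace[OF assms(1)]])

lemma coord_finite:
  assumes "is_fdd Fs" "\<And>n. xs n \<in> Fs n" "\<And>n. n \<ge> M \<Longrightarrow> xs n = 0"
  shows "coord Fs (\<Sum>n<M. xs n) = xs"
proof (rule coord_unique[OF assms(1,2)])
  show "xs sums (\<Sum>n<M. xs n)"
    by (rule sums_finite) (use assms(3) in auto)
qed

lemma subspace_closure_gen: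
  fixes S :: "'a::real_normed_vector set"
  assumes "subspace S" shows "subspace (closure S)"
  unfolding subspace_def
proof (intro conjI ballI allI)
  show "0 \<in> closure S" using assms closure_subset subspace_0 by blast
next
  fix x y assume "x \<in> closure S" "y \<in> closure S"
  then obtain f g where f: "\<And>n. f n \<in> S" "f \<longlonglongrightarrow> x" and g: "\<And>n. g n \<in> S" "g \<longlonglongrightarrow> y"
    by (meson closure_sequential)
  have "(\<lambda>n. f n + g n) \<longlonglongrightarrow> x + y" by (intro tendsto_add f g)
  moreover have "f n + g n \<in> S" for n using f g assms subspace_add by blast
  ultimately show "x + y \<in> closure S" by (meson closure_sequential)
next
  fix c and x assume "x \<in> closure S"
  then obtain f where f: "\<And>n. f n \<in> S" "f \<longlonglongrightarrow> x"
    by (meson closure_sequential)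
  have "(\<lambda>n. c *\<^sub>R f n) \<longlonglongrightarrow> c *\<^sub>R x" by (intro tendsto_scaleR f tendsto_const)
  moreover have "c *\<^sub>R f n \<in> S" for n using f assms subspace_scale by blast
  ultimately show "c *\<^sub>R x \<in> closure S" by (meson closure_sequential)
qed

lemma cspan_subspace: "subspace (cspan Fs)"
  unfolding cspan_def by (simp add: subspace_closure_gen)

lemma coord_sum:
  assumes "is_fdd Fs" "finite I" "\<And>i. i \<in> I \<Longrightarrow> x i \<in> cspan Fs"
  shows "coord Fs (\<Sum>i\<in>I. x i) n = (\<Sum>i\<in>I. coord Fs (x i) n)"
  using assms(2,3)
proof (induction I rule: finite_induct)
  case empty then show ?case by (simp add: coord_zero[OF assms(1)])
next
  case (insert i I)
  have "sum x I \<in> cspan Fs" by (rule subspace_sum[OF cspan_subspace]) (use insert in auto)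
  then show ?case using insert by (simp add: coord_add[OF assms(1)])
qed

lemma d_lemma:
  fixes V :: "'a::real_normed_vector set"
  assumes "closed V" "subspace V" "v \<notin> V"
  shows "\<exists>d>0. \<forall>a. \<forall>u\<in>V. \<bar>a\<bar> * d \<le> norm (a *\<^sub>R v + u)"
proof -
  have ne: "V \<noteq> {}" using assms(2) subspace_0 by blast
  define d where "d = infdist v V"
  have d: "d > 0" unfolding d_def by (rule infdist_pos_not_in_closed[OF assms(1) ne assms(3)])
  have "\<bar>a\<bar> * d \<le> norm (a *\<^sub>R v + u)" if u: "u \<in> V" for a u
  proof (cases "a = 0")
    case True then show ?thesis by simp
  next
    case False
    have w: "- ((1/a) *\<^sub>R u) \<in> V" using u assms(2) by (simp add: subspace_neg subspace_scale)
    have "d \<le> dist v (- ((1/a) *\<^sub>R u))" unfolding d_def by (rule infdist_le[OF w])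
    also have "\<dots> = norm (v + (1/a) *\<^sub>R u)" by (simp add: dist_norm)
    finally have "\<bar>a\<bar> * d \<le> \<bar>a\<bar> * norm (v + (1/a) *\<^sub>R u)"
      by (simp add: mult_left_mono)
    also have "\<bar>a\<bar> * norm (v + (1/a) *\<^sub>R u) = norm (a *\<^sub>R (v + (1/a) *\<^sub>R u))" by simp
    also have "a *\<^sub>R (v + (1/a) *\<^sub>R u) = a *\<^sub>R v + u" using False
      by (simp add: scaleR_add_right)
    finally show ?thesis .
  qed
  then show ?thesis using d by blast
qed

lemma closed_span_finite:
  fixes S :: "'a::real_normed_vector set"
  assumes "finite S" shows "closed (span S)"
  using assms
proof (induction S rule: finite_induct)
  case empty then show ?case by simp
next
  case (insert v S)
  show ?case
  proof (cases "v \<in> span S")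
    case True then show ?thesis using insert by (simp add: span_redundant)
  next
    case False
    obtain d where d: "d > 0" "\<And>a u. u \<in> span S \<Longrightarrow> \<bar>a\<bar> * d \<le> norm (a *\<^sub>R v + u)"
      using d_lemma[OF insert(3) subspace_span False] by blast
    show ?thesis unfolding closed_sequential_limits
    proof (intro allI impI, elim conjE)
      fix f l assume f: "\<forall>n. f n \<in> span (insert v S)" "f \<longlonglongrightarrow> l"
      have "\<forall>n. \<exists>a. f n - a *\<^sub>R v \<in> span S" using f(1) span_breakdown_eq by blast
      then obtain a where a: "\<And>n. f n - a n *\<^sub>R v \<in> span S" using choice[OF \<open>\<forall>n. \<exists>a. _\<close>] by blast
      have diff: "\<bar>a n - a m\<bar> * d \<le> norm (f n - f m)" for n m
      proof -
        have "(f n - a n *\<^sub>R v) - (f m - a m *\<^sub>R v) \<in> span S" using a span_diff by blast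
        from d(2)[OF this, of "a n - a m"] show ?thesis by (simp add: algebra_simps)
      qed
      have "Cauchy a"
        unfolding Cauchy_def
      proof (intro allI impI)
        fix e :: real assume e: "e > 0"
        from LIMSEQ_imp_Cauchy[OF f(2)] obtain M where M: "\<forall>m\<ge>M. \<forall>n\<ge>M. dist (f m) (f n) < e * d"
          unfolding Cauchy_def using e d by (meson mult_pos_pos)
        show "\<exists>M. \<forall>m\<ge>M. \<forall>n\<ge>M. dist (a m) (a n) < e"
        proof (intro exI allI impI)
          fix m n assume "m \<ge> M" "n \<ge> M"
          then have "norm (f m - f n) < e * d" using M by (simp add: dist_norm)
          then have "\<bar>a m - a n\<bar> * d < e * d" using diff[of m n] by linarith
          then show "dist (a m) (a n) < e" using d by (simp add: dist_real_def)
        qed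
      qed
      then obtain \<alpha> where \<alpha>: "a \<longlonglongrightarrow> \<alpha>" using Cauchy_convergent_iff convergent_def by blast
      have "(\<lambda>n. f n - a n *\<^sub>R v) \<longlonglongrightarrow> l - \<alpha> *\<^sub>R v" by (intro tendsto_intros f(2) \<alpha>)
      then have "l - \<alpha> *\<^sub>R v \<in> span S"
        using insert(3) a unfolding closed_sequential_limits by (elim allE impE) auto
      then show "l \<in> span (insert v S)" using span_breakdown_eq by blast
    qed
  qed
qed

lemma finite_basis_of:
  fixes S :: "'a::real_vector set"
  assumes "finite S"
  obtains T where "finite T" "independent T" "span T = span S" "T \<subseteq> S"
proof -
  obtain T where T: "T \<subseteq> S" "independent T" "S \<subseteq> span T" by (rule maximal_independent_subset)
  have "span T = span S"
  proof (rule subset_antisym)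
    show "span T \<subseteq> span S" using T(1) by (rule span_mono)
    show "span S \<subseteq> span T" using span_mono[OF T(3)] by (simp add: span_span)
  qed
  then show ?thesis using that T assms finite_subset by blast
qed

lemma coord_bound:
  fixes T :: "'a::real_normed_vector set"
  assumes "finite T" "independent T"
  shows "\<exists>M\<ge>0. \<forall>w\<in>span T. \<forall>t\<in>T. \<bar>representation T w t\<bar> \<le> M * norm w"
proof -
  have "\<forall>t\<in>T. \<exists>d>0. \<forall>a. \<forall>u\<in>span (T - {t}). \<bar>a\<bar> * d \<le> norm (a *\<^sub>R t + u)"
  proof
    fix t assume t: "t \<in> T"
    have "t \<notin> span (T - {t})" using assms(2) t by (simp add: dependent_def)
    then show "\<exists>d>0. \<forall>a. \<forall>u\<in>span (T - {t}). \<bar>a\<bar> * d \<le> norm (a *\<^sub>R t + u)"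
      by (intro d_lemma closed_span_finite subspace_span) (use assms in auto)
  qed
  then obtain d where d0: "\<forall>t\<in>T. d t > 0 \<and> (\<forall>a. \<forall>u\<in>span (T - {t}). \<bar>a\<bar> * d t \<le> norm (a *\<^sub>R t + u))"
    using bchoice[OF \<open>\<forall>t\<in>T. _\<close>] by blast
  then have d: "\<And>t. t \<in> T \<Longrightarrow> d t > 0"
    "\<And>t a u. t \<in> T \<Longrightarrow> u \<in> span (T - {t}) \<Longrightarrow> \<bar>a\<bar> * d t \<le> norm (a *\<^sub>R t + u)"
    by blast+
  define M where "M = (\<Sum>t\<in>T. 1 / d t)"
  have M0: "M \<ge> 0" unfolding M_def using d(1) by (simp add: sum_nonneg less_imp_le)
  have "\<bar>representation T w t\<bar> \<le> M * norm w" if w: "w \<in> span T" and t: "t \<in> T" for w t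
  proof -
    let ?r = "representation T w"
    have "w = (\<Sum>s\<in>T. ?r s *\<^sub>R s)" using sum_representation_eq[OF assms(2) w assms(1)] by simp
    also have "\<dots> = ?r t *\<^sub>R t + (\<Sum>s\<in>T - {t}. ?r s *\<^sub>R s)"
      using sum.remove[OF assms(1) t] by simp
    finally have weq: "w = ?r t *\<^sub>R t + (\<Sum>s\<in>T - {t}. ?r s *\<^sub>R s)" .
    have "(\<Sum>s\<in>T - {t}. ?r s *\<^sub>R s) \<in> span (T - {t})"
      by (intro span_sum span_scale span_base) auto
    from d(2)[OF t this, of "?r t"] weq have "\<bar>?r t\<bar> * d t \<le> norm w" by simp
    then have "\<bar>?r t\<bar> \<le> norm w / d t" using d(1)[OF t] by (simp add: field_simps)
    also have "\<dots> = (1 / d t) * norm w" by simp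
    also have "\<dots> \<le> M * norm w"
      unfolding M_def
      by (rule mult_right_mono[OF member_le_sum]) (use t assms(1) d(1) in \<open>auto simp: less_imp_le\<close>)
    finally show ?thesis .
  qed
  then show ?thesis using M0 by blast
qed

lemma linear_on_sum:
  assumes add: "\<And>x y. x \<in> V \<Longrightarrow> y \<in> V \<Longrightarrow> f (x + y) = f x + f y"
    and zero: "f 0 = 0" and sub: "subspace V"
    and "finite I" "\<And>i. i \<in> I \<Longrightarrow> g i \<in> V"
  shows "f (\<Sum>i\<in>I. g i) = (\<Sum>i\<in>I. f (g i))"
  using assms(4,5)
proof (induction I rule: finite_induct)
  case (insert i I)
  have "sum g I \<in> V" using insert sub by (intro subspace_sum) auto
  then show ?case using insert add by simp
qed (simp add: zero)

lemma findim_uniform: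
  fixes R :: "nat \<Rightarrow> 'a::real_normed_vector \<Rightarrow> 'b::real_normed_vector"
  assumes S: "finite S"
    and add: "\<And>p x y. x \<in> span S \<Longrightarrow> y \<in> span S \<Longrightarrow> R p (x + y) = R p x + R p y"
    and scale: "\<And>p c x. x \<in> span S \<Longrightarrow> R p (c *\<^sub>R x) = c *\<^sub>R R p x"
    and lim: "\<And>x. x \<in> span S \<Longrightarrow> (\<lambda>p. R p x) \<longlonglongrightarrow> 0"
    and e: "e > 0"
  shows "\<exists>T. \<forall>p\<ge>T. \<forall>x\<in>span S. norm (R p x) \<le> e * norm x"
proof -
  obtain T where T: "finite T" "independent T" "span T = span S" "T \<subseteq> S"
    using finite_basis_of[OF S] by blast
  obtain M where M: "M \<ge> 0" "\<And>w t. w \<in> span T \<Longrightarrow> t \<in> T \<Longrightarrow> \<bar>representation T w t\<bar> \<le> M * norm w"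
    using coord_bound[OF T(1,2)] by blast
  have TS: "t \<in> span S" if "t \<in> T" for t using T(3) that span_base by blast
  have "(\<lambda>p. M * (\<Sum>t\<in>T. norm (R p t))) \<longlonglongrightarrow> M * (\<Sum>t\<in>T. norm (0::'b))"
    by (intro tendsto_mult tendsto_const tendsto_sum tendsto_norm lim TS)
  then have "(\<lambda>p. M * (\<Sum>t\<in>T. norm (R p t))) \<longlonglongrightarrow> 0" by simp
  then have "eventually (\<lambda>p. M * (\<Sum>t\<in>T. norm (R p t)) < e) sequentially"
    using e by (simp add: order_tendsto_iff)
  then obtain N where N: "\<And>p. p \<ge> N \<Longrightarrow> M * (\<Sum>t\<in>T. norm (R p t)) < e"
    unfolding eventually_sequentially by blast
  have "norm (R p x) \<le> e * norm x" if p: "p \<ge> N" and x: "x \<in> span S" for p x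
  proof -
    have xT: "x \<in> span T" using x T(3) by simp
    have R0: "R p 0 = 0" using scale[of 0 p 0] by (simp add: span_zero)
    have "x = (\<Sum>t\<in>T. representation T x t *\<^sub>R t)"
      using sum_representation_eq[OF T(2) xT T(1)] by simp
    moreover have "R p (\<Sum>t\<in>T. representation T x t *\<^sub>R t) = (\<Sum>t\<in>T. R p (representation T x t *\<^sub>R t))"
      by (rule linear_on_sum[where f="R p", OF add R0 subspace_span T(1)]) (use TS in \<open>auto intro: span_scale\<close>)
    ultimately have "R p x = (\<Sum>t\<in>T. representation T x t *\<^sub>R R p t)"
      using scale TS by simp
    then have "norm (R p x) \<le> (\<Sum>t\<in>T. norm (representation T x t *\<^sub>R R p t))"
      using norm_sum[of "\<lambda>t. representation T x t *\<^sub>R R p t" T] by simp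
    also have "\<dots> = (\<Sum>t\<in>T. \<bar>representation T x t\<bar> * norm (R p t))"
      by simp
    also have "\<dots> \<le> (\<Sum>t\<in>T. (M * norm x) * norm (R p t))"
      by (intro sum_mono mult_right_mono M(2) xT) auto
    also have "\<dots> = norm x * (M * (\<Sum>t\<in>T. norm (R p t)))"
      by (simp add: sum_distrib_left mult_ac)
    also have "\<dots> \<le> norm x * e" using N[OF p] by (intro mult_left_mono) auto
    finally show ?thesis by (simp add: mult_ac)
  qed
  then show ?thesis by blast
qed

lemma linear_extend_subspace:
  fixes g :: "'a::real_vector \<Rightarrow> 'b::real_vector"
  assumes Z: "subspace Z"
    and add: "\<And>x y. x \<in> Z \<Longrightarrow> y \<in> Z \<Longrightarrow> g (x + y) = g x + g y"
    and scale: "\<And>c x. x \<in> Z \<Longrightarrow> g (c *\<^sub>R x) = c *\<^sub>R g x"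
  shows "\<exists>f. linear f \<and> (\<forall>x\<in>Z. f x = g x)"
proof -
  obtain B where B: "B \<subseteq> Z" "independent B" "Z \<subseteq> span B" by (rule maximal_independent_subset)
  define f where "f = construct B g"
  have lin: "linear f" unfolding f_def by (rule linear_construct[OF B(2)])
  have fb: "f b = g b" if "b \<in> B" for b unfolding f_def by (rule construct_basis[OF B(2) that])
  have "span B \<subseteq> {x \<in> Z. f x = g x}"
  proof (rule span_minimal)
    show "B \<subseteq> {x \<in> Z. f x = g x}" using B(1) fb by auto
    show "subspace {x \<in> Z. f x = g x}"
      unfolding subspace_def
    proof (intro conjI ballI allI)
      have "g 0 = 0" using scale[of 0 0] Z subspace_0 by auto
      then show "0 \<in> {x \<in> Z. f x = g x}" using Z subspace_0 linear_0[OF lin] by auto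
      show "x + y \<in> {x \<in> Z. f x = g x}" if "x \<in> {x \<in> Z. f x = g x}" "y \<in> {x \<in> Z. f x = g x}" for x y
        using that Z subspace_add add linear_add[OF lin] by auto
      show "c *\<^sub>R x \<in> {x \<in> Z. f x = g x}" if "x \<in> {x \<in> Z. f x = g x}" for c x
        using that Z subspace_scale scale linear_scale[OF lin] by auto
    qed
  qed
  then show ?thesis using lin B(3) by blast
qed

lemma tail_span_sub: "span (\<Union>n\<in>{m..}. Fs n) \<subseteq> cspan Fs"
  using cspan_sub[of Fs] span_mono[of "\<Union>n\<in>{m..}. Fs n" "\<Union>n. Fs n"] by blast

lemma shrink_bound:
  fixes f :: "'a::real_normed_vector \<Rightarrow> real"
  assumes sh: "shrinking_fdd B" and lin: "linear f" and K: "\<And>x. x \<in> cspan B \<Longrightarrow> \<bar>f x\<bar> \<le> K * norm x"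
  defines "\<sigma> \<equiv> \<lambda>m. Sup {\<bar>f x\<bar> | x. x \<in> span (\<Union>n\<in>{m..}. B n) \<and> norm x \<le> 1}"
  shows "\<sigma> \<longlonglongrightarrow> 0" "\<And>m x. x \<in> span (\<Union>n\<in>{m..}. B n) \<Longrightarrow> \<bar>f x\<bar> \<le> \<sigma> m * norm x"
proof -
  show "\<sigma> \<longlonglongrightarrow> 0" using sh lin K unfolding shrinking_fdd_def \<sigma>_def by blast
  fix m x assume x: "x \<in> span (\<Union>n\<in>{m..}. B n)"
  let ?S = "{\<bar>f x\<bar> | x. x \<in> span (\<Union>n\<in>{m..}. B n) \<and> norm x \<le> 1}"
  have bdd: "bdd_above ?S"
  proof (rule bdd_aboveI)
    fix y assume "y \<in> ?S"
    then obtain z where z: "y = \<bar>f z\<bar>" "z \<in> span (\<Union>n\<in>{m..}. B n)" "norm z \<le> 1" by blast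
    have "z \<in> cspan B" using z(2) tail_span_sub by blast
    then have "y \<le> K * norm z" using K z(1) by blast
    also have "\<dots> \<le> max K 0 * 1" using z(3) by (intro mult_mono) auto
    finally show "y \<le> max K 0" by simp
  qed
  show "\<bar>f x\<bar> \<le> \<sigma> m * norm x"
  proof (cases "x = 0")
    case True then show ?thesis using linear_0[OF lin] by simp
  next
    case False
    define y where "y = (1 / norm x) *\<^sub>R x"
    have y: "y \<in> span (\<Union>n\<in>{m..}. B n)" "norm y \<le> 1" unfolding y_def using x False
      by (auto intro: span_scale)
    then have "\<bar>f y\<bar> \<le> \<sigma> m" unfolding \<sigma>_def by (intro cSup_upper bdd) blast
    moreover have "\<bar>f x\<bar> = norm x * \<bar>f y\<bar>" unfolding y_def linear_scale[OF lin] using False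
      by (simp add: abs_mult)
    ultimately show ?thesis using False by (simp add: mult_left_mono mult.commute)
  qed
qed

lemma shrink_head:
  fixes \<phi> :: "'a::real_normed_vector \<Rightarrow> 'a"
  assumes sh: "shrinking_fdd B" and Z: "subspace Z" and BZ: "cspan B \<subseteq> Z"
    and add: "\<And>x y. x \<in> Z \<Longrightarrow> y \<in> Z \<Longrightarrow> \<phi> (x + y) = \<phi> x + \<phi> y"
    and scale: "\<And>c x. x \<in> Z \<Longrightarrow> \<phi> (c *\<^sub>R x) = c *\<^sub>R \<phi> x"
    and S: "finite S" and rng: "\<And>x. x \<in> Z \<Longrightarrow> \<phi> x \<in> span S"
    and bnd: "\<And>x. x \<in> Z \<Longrightarrow> norm (\<phi> x) \<le> A * norm x"
    and e: "e > 0"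
  shows "\<exists>N. \<forall>n\<ge>N. \<forall>x\<in>span (\<Union>i\<in>{n..}. B i). norm (\<phi> x) \<le> e * norm x"
proof -
  obtain T where T: "finite T" "independent T" "span T = span S" "T \<subseteq> S"
    using finite_basis_of[OF S] by blast
  obtain M where M: "M \<ge> 0" "\<And>w t. w \<in> span T \<Longrightarrow> t \<in> T \<Longrightarrow> \<bar>representation T w t\<bar> \<le> M * norm w"
    using coord_bound[OF T(1,2)] by blast
  have rngT: "\<phi> x \<in> span T" if "x \<in> Z" for x using rng[OF that] T(3) by simp
  have "\<forall>t\<in>T. \<exists>f. linear f \<and> (\<forall>x\<in>Z. f x = representation T (\<phi> x) t)"
  proof
    fix t assume t: "t \<in> T"
    show "\<exists>f. linear f \<and> (\<forall>x\<in>Z. f x = representation T (\<phi> x) t)"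
    proof (rule linear_extend_subspace[OF Z])
      fix x y assume "x \<in> Z" "y \<in> Z"
      then show "representation T (\<phi> (x + y)) t = representation T (\<phi> x) t + representation T (\<phi> y) t"
        using add representation_add[OF T(2) rngT rngT] by simp
    next
      fix c x assume "x \<in> Z"
      then show "representation T (\<phi> (c *\<^sub>R x)) t = c *\<^sub>R representation T (\<phi> x) t"
        using scale representation_scale[OF T(2) rngT] by simp
    qed
  qed
  then obtain f where f: "\<forall>t\<in>T. linear (f t) \<and> (\<forall>x\<in>Z. f t x = representation T (\<phi> x) t)"
    using bchoice[OF \<open>\<forall>t\<in>T. _\<close>] by blast
  define \<sigma> where "\<sigma> = (\<lambda>t m. Sup {\<bar>f t x\<bar> | x. x \<in> span (\<Union>n\<in>{m..}. B n) \<and> norm x \<le> 1})"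
  have fK: "\<bar>f t x\<bar> \<le> (M * A) * norm x" if "t \<in> T" "x \<in> cspan B" for t x
  proof -
    have xZ: "x \<in> Z" using that BZ by blast
    have "\<bar>f t x\<bar> = \<bar>representation T (\<phi> x) t\<bar>" using f that xZ by auto
    also have "\<dots> \<le> M * norm (\<phi> x)" using M(2)[OF rngT[OF xZ] that(1)] .
    also have "\<dots> \<le> M * (A * norm x)" using bnd[OF xZ] M(1) by (rule mult_left_mono)
    finally show ?thesis by (simp add: mult_ac)
  qed
  have lim: "\<sigma> t \<longlonglongrightarrow> 0" if "t \<in> T" for t
    unfolding \<sigma>_def by (rule shrink_bound(1)[OF sh]) (use f that fK in auto)
  have bd: "\<bar>f t x\<bar> \<le> \<sigma> t m * norm x" if "t \<in> T" "x \<in> span (\<Union>n\<in>{m..}. B n)" for t m x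
    unfolding \<sigma>_def by (rule shrink_bound(2)[OF sh]) (use f that fK in auto)
  have "(\<lambda>m. \<Sum>t\<in>T. \<sigma> t m * norm t) \<longlonglongrightarrow> (\<Sum>t\<in>T. 0 * norm t)"
    by (intro tendsto_sum tendsto_mult lim tendsto_const)
  then have "eventually (\<lambda>m. (\<Sum>t\<in>T. \<sigma> t m * norm t) < e) sequentially"
    using e by (simp add: order_tendsto_iff)
  then obtain N where N: "\<And>m. m \<ge> N \<Longrightarrow> (\<Sum>t\<in>T. \<sigma> t m * norm t) < e"
    unfolding eventually_sequentially by blast
  have "norm (\<phi> x) \<le> e * norm x" if m: "m \<ge> N" and x: "x \<in> span (\<Union>n\<in>{m..}. B n)" for m x
  proof -
    have xZ: "x \<in> Z" using x tail_span_sub BZ by blast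
    have "\<phi> x = (\<Sum>t\<in>T. representation T (\<phi> x) t *\<^sub>R t)"
      using sum_representation_eq[OF T(2) rngT[OF xZ] T(1)] by simp
    also have "\<dots> = (\<Sum>t\<in>T. f t x *\<^sub>R t)" using f xZ by (intro sum.cong) auto
    finally have "norm (\<phi> x) \<le> (\<Sum>t\<in>T. norm (f t x *\<^sub>R t))"
      using norm_sum[of "\<lambda>t. f t x *\<^sub>R t" T] by simp
    also have "\<dots> = (\<Sum>t\<in>T. \<bar>f t x\<bar> * norm t)" by simp
    also have "\<dots> \<le> (\<Sum>t\<in>T. (\<sigma> t m * norm x) * norm t)"
      by (intro sum_mono mult_right_mono bd x) auto
    also have "\<dots> = norm x * (\<Sum>t\<in>T. \<sigma> t m * norm t)"
      by (simp add: sum_distrib_left mult_ac)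
    also have "\<dots> \<le> norm x * e" using N[OF m] by (intro mult_left_mono) auto
    finally show ?thesis by (simp add: mult_ac)
  qed
  then show ?thesis by blast
qed

definition abs_const :: "(nat \<Rightarrow> 'a::banach_lattice set) \<Rightarrow> real" where
  "abs_const C = (SOME A. A \<ge> 1 \<and> (\<forall>m xs. (\<forall>n. xs n \<in> C n) \<longrightarrow>
      norm (\<Sum>n<m. labs (xs n)) \<le> A * norm (\<Sum>n<m. xs n)))"

lemma abs_const:
  assumes "absolute_fdd C"
  shows "abs_const C \<ge> 1"
    "\<And>m xs. (\<And>n. xs n \<in> C n) \<Longrightarrow> norm (\<Sum>n<m. labs (xs n)) \<le> abs_const C * norm (\<Sum>n<m. xs n)"
proof -
  have "\<exists>A. A \<ge> 1 \<and> (\<forall>m xs. (\<forall>n. xs n \<in> C n) \<longrightarrow>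
      norm (\<Sum>n<m. labs (xs n)) \<le> A * norm (\<Sum>n<m. xs n))"
    using assms unfolding absolute_fdd_def by blast
  from someI_ex[OF this] show "abs_const C \<ge> 1"
    "\<And>m xs. (\<And>n. xs n \<in> C n) \<Longrightarrow> norm (\<Sum>n<m. labs (xs n)) \<le> abs_const C * norm (\<Sum>n<m. xs n)"
    unfolding abs_const_def[symmetric] by blast+
qed

definition Qp :: "(nat \<Rightarrow> 'a::real_normed_vector set) \<Rightarrow> nat \<Rightarrow> 'a \<Rightarrow> 'a" where
  "Qp C p x = (\<Sum>n<p. coord C x n)"

lemma Qp_bound:
  assumes C: "absolute_fdd C" and x: "x \<in> cspan C"
  shows "norm (Qp C p x) \<le> abs_const C * norm x"
proof -
  have fdd: "is_fdd C" using C absolute_fdd_def by blast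
  let ?A = "abs_const C" and ?c = "coord C x"
  have cin: "\<And>n. ?c n \<in> C n" using coord[OF fdd x] by blast
  have lim: "(\<lambda>M. ?A * norm (\<Sum>n<M. ?c n)) \<longlonglongrightarrow> ?A * norm x"
    using coord(2)[OF fdd x] unfolding sums_def by (intro tendsto_intros)
  have "norm (Qp C p x) \<le> ?A * norm (\<Sum>n<M. ?c n)" if M: "M \<ge> p" for M
  proof -
    have "labs (Qp C p x) \<le> (\<Sum>n<p. labs (?c n))" unfolding Qp_def by (rule labs_sum)
    also have "\<dots> \<le> (\<Sum>n<M. labs (?c n))"
      by (rule sum_mono2) (use M in \<open>auto simp: labs_nonneg\<close>)
    finally have "norm (labs (Qp C p x)) \<le> norm (\<Sum>n<M. labs (?c n))"
      by (intro norm_mono_pos labs_nonneg)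
    also have "\<dots> \<le> ?A * norm (\<Sum>n<M. ?c n)" by (rule abs_const(2)[OF C cin])
    finally show ?thesis by simp
  qed
  then show ?thesis by (intro LIMSEQ_le_const[OF lim]) blast
qed

lemma Qp_add:
  assumes "is_fdd C" "x \<in> cspan C" "y \<in> cspan C"
  shows "Qp C p (x + y) = Qp C p x + Qp C p y"
  unfolding Qp_def coord_add[OF assms] by (simp add: sum.distrib)

lemma Qp_scale:
  assumes "is_fdd C" "x \<in> cspan C"
  shows "Qp C p (c *\<^sub>R x) = c *\<^sub>R Qp C p x"
  unfolding Qp_def coord_scale[OF assms] by (simp add: scaleR_sum_right)

lemma Qp_diff:
  assumes "is_fdd C" "x \<in> cspan C" "y \<in> cspan C"
  shows "Qp C p (x - y) = Qp C p x - Qp C p y"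
  unfolding Qp_def coord_diff[OF assms] by (simp add: sum_subtractf)

lemma Qp_lim:
  assumes "is_fdd C" "x \<in> cspan C"
  shows "(\<lambda>p. Qp C p x) \<longlonglongrightarrow> x"
  using coord(2)[OF assms] unfolding Qp_def sums_def by simp

lemma Qp_in: "is_fdd C \<Longrightarrow> x \<in> cspan C \<Longrightarrow> Qp C p x \<in> cspan C"
  unfolding Qp_def by (intro subspace_sum[OF cspan_subspace]) (use coord Fs_sub_cspan in blast)

lemma fdd_gens:
  assumes "is_fdd C"
  obtains SC where "\<And>n. finite (SC n)" "\<And>n. C n = span (SC n)"
proof -
  have "\<forall>n. \<exists>S. finite S \<and> C n = span S" using fdd_D(3)[OF assms] by blast
  then obtain SC where "\<forall>n. finite (SC n) \<and> C n = span (SC n)" using choice by metis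
  then show ?thesis using that by blast
qed

lemma Qp_range:
  assumes "is_fdd C" "x \<in> cspan C" "\<And>n. C n = span (SC n)"
  shows "Qp C p x \<in> span (\<Union>n<p. SC n)"
  unfolding Qp_def
proof (rule span_sum)
  fix n assume "n \<in> {..<p}"
  then have "C n \<subseteq> span (\<Union>n<p. SC n)" using assms(3) span_mono by (metis UN_upper)
  then show "coord C x n \<in> span (\<Union>n<p. SC n)" using coord(1)[OF assms(1,2)] by blast
qed

lemma tail_uniform:
  assumes C: "absolute_fdd C" and S: "finite S" "span S \<subseteq> cspan C" and e: "e > 0"
  shows "\<exists>T. \<forall>p\<ge>T. \<forall>x\<in>span S. norm (x - Qp C p x) \<le> e * norm x"
proof -
  have fdd: "is_fdd C" using C absolute_fdd_def by blast
  show ?thesis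
  proof (rule findim_uniform[OF S(1) _ _ _ e, where R="\<lambda>p x. x - Qp C p x"])
    fix p x y assume "x \<in> span S" "y \<in> span S"
    then have "x \<in> cspan C" "y \<in> cspan C" using S(2) by auto
    then show "x + y - Qp C p (x + y) = x - Qp C p x + (y - Qp C p y)"
      using Qp_add[OF fdd, of x y p] by (simp add: algebra_simps)
  next
    fix p c x assume "x \<in> span S"
    then show "c *\<^sub>R x - Qp C p (c *\<^sub>R x) = c *\<^sub>R (x - Qp C p x)"
      using Qp_scale[OF fdd] S(2) by (auto simp: scaleR_diff_right)
  next
    fix x assume "x \<in> span S"
    then have "(\<lambda>p. Qp C p x) \<longlonglongrightarrow> x" using Qp_lim[OF fdd] S(2) by blast
    then have "(\<lambda>p. x - Qp C p x) \<longlonglongrightarrow> x - x" by (intro tendsto_diff tendsto_const)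
    then show "(\<lambda>p. x - Qp C p x) \<longlonglongrightarrow> 0" by simp
  qed
qed

lemma head_uniform:
  assumes C: "absolute_fdd C" and sh: "shrinking_fdd B" and BC: "cspan B \<subseteq> cspan C" and e: "e > 0"
  shows "\<exists>N. \<forall>n\<ge>N. \<forall>x\<in>span (\<Union>i\<in>{n..}. B i). norm (Qp C p x) \<le> e * norm x"
proof -
  have fdd: "is_fdd C" using C absolute_fdd_def by blast
  obtain SC where SC: "\<And>n. finite (SC n)" "\<And>n. C n = span (SC n)" using fdd_gens[OF fdd] by blast
  show ?thesis
  proof (rule shrink_head[OF sh cspan_subspace BC _ _ _ _ _ e, where \<phi>="Qp C p" and S="\<Union>n<p. SC n"
          and A="abs_const C"])
    show "finite (\<Union>n<p. SC n)" using SC(1) by blast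
    show "Qp C p (x + y) = Qp C p x + Qp C p y" if "x \<in> cspan C" "y \<in> cspan C" for x y
      using Qp_add[OF fdd that] .
    show "Qp C p (c *\<^sub>R x) = c *\<^sub>R Qp C p x" if "x \<in> cspan C" for c x
      using Qp_scale[OF fdd that] .
    show "Qp C p x \<in> span (\<Union>n<p. SC n)" if "x \<in> cspan C" for x
      using Qp_range[OF fdd that SC(2)] .
    show "norm (Qp C p x) \<le> abs_const C * norm x" if "x \<in> cspan C" for x
      using Qp_bound[OF C that] .
  qed
qed

lemma sum_single_ite:
  assumes J: "finite J"
    and disj: "\<And>i j. i \<in> J \<Longrightarrow> j \<in> J \<Longrightarrow> i \<noteq> j \<Longrightarrow> E i \<inter> E j = {}"
  shows "(\<Sum>j\<in>J. if n \<in> E j then g j n else 0) = (if \<exists>j\<in>J. n \<in> E j then g (THE j. j \<in> J \<and> n \<in> E j) n else (0::'a::comm_monoid_add))"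
proof (cases "\<exists>j\<in>J. n \<in> E j")
  case True
  then obtain j0 where j0: "j0 \<in> J" "n \<in> E j0" by blast
  have notin: "n \<notin> E j" if "j \<in> J" "j \<noteq> j0" for j
    using disj[OF that(1) j0(1) that(2)] j0(2) by blast
  have the: "(THE j. j \<in> J \<and> n \<in> E j) = j0"
    by (rule the_equality) (use j0 notin in auto)
  have "(\<Sum>j\<in>J. if n \<in> E j then g j n else 0) = (if n \<in> E j0 then g j0 n else 0) + (\<Sum>j\<in>J - {j0}. if n \<in> E j then g j n else 0)"
    using sum.remove[OF J j0(1), of "\<lambda>j. if n \<in> E j then g j n else 0"] j0(2) by simp
  also have "(\<Sum>j\<in>J - {j0}. if n \<in> E j then g j n else 0) = 0"
    using notin by (intro sum.neutral) auto
  finally show ?thesis using True j0 the by simp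
qed simp

lemma disjoint_absolute:
  assumes C: "absolute_fdd C" and J: "finite J"
    and EP: "\<And>j. j \<in> J \<Longrightarrow> E j \<subseteq> {..<P}"
    and disj: "\<And>i j. i \<in> J \<Longrightarrow> j \<in> J \<Longrightarrow> i \<noteq> j \<Longrightarrow> E i \<inter> E j = {}"
    and v: "\<And>j n. v j n \<in> C n"
  shows "norm (\<Sum>j\<in>J. \<Sum>n\<in>E j. labs (v j n)) \<le> abs_const C * norm (\<Sum>j\<in>J. \<Sum>n\<in>E j. v j n)"
proof -
  have fdd: "is_fdd C" using C absolute_fdd_def by blast
  define xs where "xs n = (\<Sum>j\<in>J. if n \<in> E j then v j n else 0)" for n
  have xsC: "xs n \<in> C n" for n
    unfolding xs_def by (intro subspace_sum[OF fdd_subspace[OF fdd]]) (auto simp: v subspace_0[OF fdd_subspace[OF fdd]])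
  have sw: "(\<Sum>n<P. \<Sum>j\<in>J. if n \<in> E j then g j n else 0) = (\<Sum>j\<in>J. \<Sum>n\<in>E j. g j n)"
    for g
  proof -
    have "(\<Sum>n<P. \<Sum>j\<in>J. if n \<in> E j then g j n else 0) = (\<Sum>j\<in>J. \<Sum>n<P. if n \<in> E j then g j n else 0)"
      by (rule sum.swap)
    also have "\<dots> = (\<Sum>j\<in>J. \<Sum>n\<in>{..<P} \<inter> E j. g j n)"
      by (rule sum.cong[OF refl]) (simp add: sum.inter_restrict)
    also have "\<dots> = (\<Sum>j\<in>J. \<Sum>n\<in>E j. g j n)"
      using EP by (intro sum.cong[OF refl]) (simp add: Int_absorb1)
    finally show ?thesis .
  qed
  have "labs (xs n) = (\<Sum>j\<in>J. if n \<in> E j then labs (v j n) else 0)" for n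
    unfolding xs_def using sum_single_ite[OF J disj, where g=v and n=n] sum_single_ite[OF J disj, where g="\<lambda>j n. labs (v j n)" and n=n] by simp
  then have "(\<Sum>n<P. labs (xs n)) = (\<Sum>j\<in>J. \<Sum>n\<in>E j. labs (v j n))"
    using sw[of "\<lambda>j n. labs (v j n)"] by simp
  moreover have "(\<Sum>n<P. xs n) = (\<Sum>j\<in>J. \<Sum>n\<in>E j. v j n)"
    unfolding xs_def by (rule sw)
  ultimately show ?thesis using abs_const(2)[OF C xsC, of P] by simp
qed

lemma block_perm:
  fixes N :: "nat \<Rightarrow> nat" and q :: "nat \<Rightarrow> nat \<Rightarrow> nat"
  assumes N: "strict_mono N" "N 0 = 0"
    and q: "\<And>i. bij_betw (q i) {N i..<N (Suc i)} {N i..<N (Suc i)}"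
  defines "blk \<equiv> \<lambda>n. LEAST i. n < N (Suc i)"
  defines "p \<equiv> \<lambda>n. q (blk n) n"
  shows "bij p" "\<And>i. p ` {..<N i} = {..<N i}" "\<And>i A. A \<subseteq> {N i..<N (Suc i)} \<Longrightarrow> p ` A = q i ` A"
proof -
  have ex: "\<exists>i. n < N (Suc i)" for n
    using seq_suble[OF N(1), of "Suc n"] by (intro exI[of _ n]) simp
  have blk1: "n < N (Suc (blk n))" for n unfolding blk_def by (rule LeastI_ex[OF ex])
  have blk2: "N (blk n) \<le> n" for n
  proof (cases "blk n")
    case 0 then show ?thesis using N(2) by simp
  next
    case (Suc j)
    then have "j < blk n" by simp
    then have "\<not> n < N (Suc j)" unfolding blk_def by (rule not_less_Least)
    then show ?thesis using Suc by simp
  qed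
  have blk_unique: "blk n = i" if "N i \<le> n" "n < N (Suc i)" for n i
  proof -
    have "blk n \<le> i" unfolding blk_def by (rule Least_le) (rule that(2))
    moreover have "\<not> blk n < i"
    proof
      assume "blk n < i"
      then have "N (Suc (blk n)) \<le> N i" using strict_mono_less_eq[OF N(1)] by simp
      then show False using blk1[of n] that(1) by simp
    qed
    ultimately show ?thesis by simp
  qed
  have inblk: "n \<in> {N (blk n)..<N (Suc (blk n))}" for n using blk1 blk2 by simp
  have pin: "p n \<in> {N (blk n)..<N (Suc (blk n))}" for n
    unfolding p_def using q[of "blk n"] inblk[of n] bij_betwE by blast
  have blkp: "blk (p n) = blk n" for n using pin[of n] blk_unique by simp
  have injp: "inj p"
  proof (rule injI)
    fix n m assume eq: "p n = p m"
    then have "blk n = blk m" using blkp by metis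
    then have "q (blk n) n = q (blk n) m" using eq unfolding p_def by simp
    moreover have "inj_on (q (blk n)) {N (blk n)..<N (Suc (blk n))}" using q bij_betw_imp_inj_on by blast
    ultimately show "n = m" using inblk[of n] inblk[of m] \<open>blk n = blk m\<close> inj_on_eq_iff by metis
  qed
  have surjp: "surj p"
  proof -
    have "y \<in> range p" for y
    proof -
      let ?i = "blk y"
      have "y \<in> q ?i ` {N ?i..<N (Suc ?i)}" using q[of ?i] inblk[of y] bij_betw_imp_surj_on by blast
      then obtain n where n: "n \<in> {N ?i..<N (Suc ?i)}" "y = q ?i n" by blast
      then have "blk n = ?i" using blk_unique by simp
      then have "p n = y" using n unfolding p_def by simp
      then show ?thesis by (metis rangeI)
    qed
    then show ?thesis by blast
  qed
  show "bij p" using injp surjp by (simp add: bij_def)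
  show "p ` {..<N i} = {..<N i}" for i
  proof (rule endo_inj_surj)
    show "p ` {..<N i} \<subseteq> {..<N i}"
    proof
      fix y assume "y \<in> p ` {..<N i}"
      then obtain n where n: "n < N i" "y = p n" by blast
      have "blk n < i"
      proof (rule ccontr)
        assume "\<not> blk n < i"
        then have "N i \<le> N (blk n)" using strict_mono_less_eq[OF N(1)] by simp
        then show False using blk2[of n] n(1) by simp
      qed
      then have "N (Suc (blk n)) \<le> N i" using strict_mono_less_eq[OF N(1)] by simp
      then show "y \<in> {..<N i}" using pin[of n] n(2) by simp
    qed
  qed (use injp in \<open>auto intro: inj_on_subset\<close>)
  show "p ` A = q i ` A" if "A \<subseteq> {N i..<N (Suc i)}" for i A
  proof (rule image_cong[OF refl])
    fix n assume "n \<in> A"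
    then have "blk n = i" using that blk_unique by auto
    then show "p n = q i n" unfolding p_def by simp
  qed
qed

lemma finite_perm_onto:
  fixes G :: "nat set"
  assumes G: "G \<subseteq> {a..<b}"
  shows "\<exists>q. bij_betw q {a..<b} {a..<b} \<and> q ` {a..<a + card G} = G"
proof -
  have fG: "finite G" using G finite_subset by blast
  have cG: "card G \<le> b - a" using card_mono[OF _ G] by simp
  obtain f1 where f1: "bij_betw f1 {a..<a + card G} G"
    using finite_same_card_bij[of "{a..<a + card G}" G] fG by auto
  have "card ({a..<b} - G) = b - a - card G" using card_Diff_subset[OF fG G] by simp
  then obtain f2 where f2: "bij_betw f2 {a + card G..<b} ({a..<b} - G)"
    using finite_same_card_bij[of "{a + card G..<b}" "{a..<b} - G"] by auto
  define q where "q n = (if n < a + card G then f1 n else f2 n)" for n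
  have b1: "bij_betw q {a..<a + card G} G"
    using f1 by (rule bij_betw_cong[THEN iffD1, rotated]) (auto simp: q_def)
  have b2: "bij_betw q {a + card G..<b} ({a..<b} - G)"
    using f2 by (rule bij_betw_cong[THEN iffD1, rotated]) (auto simp: q_def)
  have "bij_betw q ({a..<a + card G} \<union> {a + card G..<b}) (G \<union> ({a..<b} - G))"
    by (rule bij_betw_combine[OF b1 b2]) auto
  moreover have "{a..<a + card G} \<union> {a + card G..<b} = {a..<b}" using cG by auto
  moreover have "G \<union> ({a..<b} - G) = {a..<b}" using G by auto
  ultimately show ?thesis using b1 bij_betw_imp_surj_on by metis
qed

lemma uncond_cauchy:
  assumes U: "unconditional_fdd B" and x: "x \<in> cspan B" and e: "e > 0"
  shows "\<exists>N. \<forall>S. finite S \<and> S \<subseteq> {N..} \<longrightarrow> norm (\<Sum>n\<in>S. coord B x n) \<le> e"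
proof (rule ccontr)
  assume "\<not> ?thesis"
  then have "\<forall>N. \<exists>S. finite S \<and> S \<subseteq> {N..} \<and> norm (\<Sum>n\<in>S. coord B x n) > e"
    by (auto simp: not_le)
  then obtain G where G: "\<And>N. finite (G N)" "\<And>N. G N \<subseteq> {N..}" "\<And>N. norm (\<Sum>n\<in>G N. coord B x n) > e"
    by metis
  have fdd: "is_fdd B" using U unfolding unconditional_fdd_def by blast
  define b where "b = coord B x"
  define Nn where "Nn = rec_nat 0 (\<lambda>_ m. Suc (Max (insert m (G m))))"
  have Nn0: "Nn 0 = 0" unfolding Nn_def by simp
  have NnS: "Nn (Suc i) = Suc (Max (insert (Nn i) (G (Nn i))))" for i unfolding Nn_def by simp
  have smN: "strict_mono Nn"
    unfolding strict_mono_Suc_iff NnS using G(1) by (simp add: le_imp_less_Suc)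
  have Gblk: "G (Nn i) \<subseteq> {Nn i..<Nn (Suc i)}" for i
    unfolding NnS using G(1) G(2)[of "Nn i"] by (auto simp: le_imp_less_Suc subset_eq)
  have "\<forall>i. \<exists>q. bij_betw q {Nn i..<Nn (Suc i)} {Nn i..<Nn (Suc i)} \<and> q ` {Nn i..<Nn i + card (G (Nn i))} = G (Nn i)"
    using finite_perm_onto[OF Gblk] by blast
  then obtain q where q: "\<And>i. bij_betw (q i) {Nn i..<Nn (Suc i)} {Nn i..<Nn (Suc i)}"
    "\<And>i. q i ` {Nn i..<Nn i + card (G (Nn i))} = G (Nn i)" by metis
  define blk where "blk = (\<lambda>n. LEAST i. n < Nn (Suc i))"
  define p where "p = (\<lambda>n. q (blk n) n)"
  have bp: "bij p" "\<And>i. p ` {..<Nn i} = {..<Nn i}"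
    "\<And>i A. A \<subseteq> {Nn i..<Nn (Suc i)} \<Longrightarrow> p ` A = q i ` A"
    using block_perm[OF smN Nn0 q(1)] unfolding p_def blk_def by blast+
  have injp: "inj p" using bp(1) bij_is_inj by blast
  have "(\<lambda>j. b (p j)) sums x"
    using U x bp(1) coord[OF fdd x] unfolding unconditional_fdd_def b_def by blast
  then have lim: "(\<lambda>m. \<Sum>j<m. b (p j)) \<longlonglongrightarrow> x" by (simp add: sums_def)
  define s where "s i = card (G (Nn i))" for i
  have sle: "Nn i + s i \<le> Nn (Suc i)" for i
    using card_mono[OF _ Gblk[of i]] strict_monoD[OF smN, of i "Suc i"] unfolding s_def by simp
  have P0: "(\<Sum>j<Nn i. b (p j)) = (\<Sum>n<Nn i. b n)" for i
  proof -
    have "(\<Sum>j<Nn i. b (p j)) = (\<Sum>n\<in>p ` {..<Nn i}. b n)"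
      using sum.reindex[OF inj_on_subset[OF injp], of "{..<Nn i}" b] by simp
    then show ?thesis using bp(2) by simp
  qed
  have P1: "(\<Sum>j<Nn i + s i. b (p j)) = (\<Sum>n<Nn i. b n) + (\<Sum>n\<in>G (Nn i). b n)" for i
  proof -
    have "{..<Nn i + s i} = {..<Nn i} \<union> {Nn i..<Nn i + s i}" by auto
    then have "(\<Sum>j<Nn i + s i. b (p j)) = (\<Sum>j<Nn i. b (p j)) + (\<Sum>j\<in>{Nn i..<Nn i + s i}. b (p j))"
      by (simp add: sum.union_disjoint[of "{..<Nn i}" "{Nn i..<Nn i + s i}"] ivl_disj_int)
    also have "(\<Sum>j\<in>{Nn i..<Nn i + s i}. b (p j)) = (\<Sum>n\<in>p ` {Nn i..<Nn i + s i}. b n)"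
      using sum.reindex[OF inj_on_subset[OF injp], of "{Nn i..<Nn i + s i}" b] by simp
    also have "p ` {Nn i..<Nn i + s i} = G (Nn i)"
      using bp(3)[of "{Nn i..<Nn i + s i}" i] sle[of i] q(2)[of i] unfolding s_def by auto
    finally show ?thesis using P0 by simp
  qed
  have fl0: "filterlim Nn at_top sequentially" using smN by (rule filterlim_subseq)
  have fl1: "filterlim (\<lambda>i. Nn i + s i) at_top sequentially"
    by (rule filterlim_at_top_mono[OF fl0]) auto
  have l0: "(\<lambda>i. \<Sum>j<Nn i. b (p j)) \<longlonglongrightarrow> x" using filterlim_compose[OF lim fl0] by simp
  have l1: "(\<lambda>i. \<Sum>j<Nn i + s i. b (p j)) \<longlonglongrightarrow> x" using filterlim_compose[OF lim fl1] by simp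
  have "(\<lambda>i. (\<Sum>j<Nn i + s i. b (p j)) - (\<Sum>j<Nn i. b (p j))) \<longlonglongrightarrow> x - x"
    by (intro tendsto_diff l0 l1)
  then have "(\<lambda>i. \<Sum>n\<in>G (Nn i). b n) \<longlonglongrightarrow> 0" using P0 P1 by simp
  then have "eventually (\<lambda>i. norm (\<Sum>n\<in>G (Nn i). b n) < e) sequentially"
    using e by (rule order_tendstoD(2)[OF tendsto_norm_zero])
  then obtain i where "norm (\<Sum>n\<in>G (Nn i). b n) < e" by (meson eventually_sequentially order_refl)
  then show False using G(3)[of "Nn i"] unfolding b_def by simp
qed

lemma baire_nonmeagre:
  fixes Y :: "'a::banach set" and F :: "nat \<Rightarrow> 'a set"
  assumes Y: "closed Y" "Y \<noteq> {}" and cover: "Y \<subseteq> (\<Union>k. F k)" and FY: "\<And>k. F k \<subseteq> Y"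
  shows "\<exists>k x0 r. r > 0 \<and> x0 \<in> Y \<and> (\<forall>z\<in>Y. dist x0 z < r \<longrightarrow> z \<in> closure (F k))"
proof (rule ccontr)
  assume neg: "\<not> ?thesis"
  let ?X = "top_of_set Y"
  let ?G = "range (\<lambda>k. Y \<inter> closure (F k))"
  have cm: "completely_metrizable_space ?X"
    by (rule completely_metrizable_space_closedin[OF completely_metrizable_space_euclidean]) (use Y in simp)
  have "?X interior_of \<Union>?G = {}"
  proof (rule Baire_category_alt)
    show "completely_metrizable_space ?X \<or> locally_compact_space ?X \<and> regular_space ?X" using cm by blast
    show "countable ?G" by (rule countable_image) simp
    fix T assume "T \<in> ?G"
    then obtain k where k: "T = Y \<inter> closure (F k)" by blast
    show "closedin ?X T \<and> ?X interior_of T = {}"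
    proof
      show "closedin ?X T" unfolding k closedin_closed by blast
      show "?X interior_of T = {}"
        unfolding interior_of_eq_empty
      proof (intro allI impI)
        fix U assume U: "openin ?X U \<and> U \<subseteq> T"
        show "U = {}"
        proof (rule ccontr)
          assume "U \<noteq> {}"
          then obtain x0 where x0: "x0 \<in> U" by blast
          have oU: "openin ?X U" and UT: "U \<subseteq> T" using U by blast+
          obtain Op where O: "open Op" "U = Y \<inter> Op" using oU unfolding openin_open by blast
          have "x0 \<in> Op" using x0 O(2) by blast
          then obtain r where r: "r > 0" "ball x0 r \<subseteq> Op" using O(1) open_contains_ball by blast
          have x0Y: "x0 \<in> Y" using x0 O(2) by blast
          have "\<forall>z\<in>Y. dist x0 z < r \<longrightarrow> z \<in> closure (F k)"
          proof (intro ballI impI)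
            fix z assume z: "z \<in> Y" "dist x0 z < r"
            then have "z \<in> Op" using r(2) by (auto simp: ball_def)
            then have "z \<in> T" using z(1) O(2) UT by blast
            then show "z \<in> closure (F k)" using k by blast
          qed
          then have "\<exists>k x0 r. r > 0 \<and> x0 \<in> Y \<and> (\<forall>z\<in>Y. dist x0 z < r \<longrightarrow> z \<in> closure (F k))"
            using r(1) x0Y by blast
          then show False using neg by blast
        qed
      qed
    qed
  qed
  moreover have "\<Union>?G = Y"
  proof
    show "\<Union>?G \<subseteq> Y" by blast
    show "Y \<subseteq> \<Union>?G"
    proof
      fix y assume y: "y \<in> Y"
      then obtain k where "y \<in> F k" using cover by blast
      then have "y \<in> Y \<inter> closure (F k)" using y closure_subset by blast
      then show "y \<in> \<Union>?G" by blast
    qed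
  qed
  moreover have "?X interior_of Y = Y" using interior_of_topspace[of ?X] by simp
  ultimately show False using Y(2) by simp
qed

definition tn :: "(nat \<Rightarrow> 'a::real_normed_vector set) \<Rightarrow> 'a \<Rightarrow> real" where
  "tn B x = Sup {norm (\<Sum>n\<in>S. coord B x n) | S. finite S}"

lemma tn_bdd:
  assumes U: "unconditional_fdd B" and x: "x \<in> cspan B"
  shows "bdd_above {norm (\<Sum>n\<in>S. coord B x n) | S. finite S}"
proof -
  obtain N where N: "\<And>S. finite S \<Longrightarrow> S \<subseteq> {N..} \<Longrightarrow> norm (\<Sum>n\<in>S. coord B x n) \<le> 1"
    using uncond_cauchy[OF U x, of 1] by auto
  show ?thesis
  proof (rule bdd_aboveI)
    fix y assume "y \<in> {norm (\<Sum>n\<in>S. coord B x n) | S. finite S}"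
    then obtain S where S: "finite S" "y = norm (\<Sum>n\<in>S. coord B x n)" by blast
    have "(\<Sum>n\<in>S. coord B x n) = (\<Sum>n\<in>S \<inter> {..<N}. coord B x n) + (\<Sum>n\<in>S - {..<N}. coord B x n)"
      using S(1) by (rule sum.Int_Diff)
    then have "y \<le> norm (\<Sum>n\<in>S \<inter> {..<N}. coord B x n) + norm (\<Sum>n\<in>S - {..<N}. coord B x n)"
      using S(2) norm_triangle_ineq by simp
    also have "norm (\<Sum>n\<in>S \<inter> {..<N}. coord B x n) \<le> (\<Sum>n\<in>S \<inter> {..<N}. norm (coord B x n))"
      by (rule norm_sum)
    also have "\<dots> \<le> (\<Sum>n<N. norm (coord B x n))"
      by (rule sum_mono2) auto
    also have "norm (\<Sum>n\<in>S - {..<N}. coord B x n) \<le> 1"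
      using S(1) by (intro N) auto
    finally show "y \<le> (\<Sum>n<N. norm (coord B x n)) + 1" by simp
  qed
qed

lemma tn_ge:
  assumes U: "unconditional_fdd B" and x: "x \<in> cspan B" and S: "finite S"
  shows "norm (\<Sum>n\<in>S. coord B x n) \<le> tn B x"
  unfolding tn_def by (rule cSup_upper[OF _ tn_bdd[OF U x]]) (use S in blast)

lemma tn_le:
  assumes "\<And>S. finite S \<Longrightarrow> norm (\<Sum>n\<in>S. coord B x n) \<le> c"
  shows "tn B x \<le> c"
  unfolding tn_def by (rule cSup_least) (use assms in auto)

lemma tn_nonneg:
  assumes U: "unconditional_fdd B" and x: "x \<in> cspan B"
  shows "0 \<le> tn B x"
  using tn_ge[OF U x, of "{}"] by simp

lemma tn_coord:
  assumes U: "unconditional_fdd B" and x: "x \<in> cspan B"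
  shows "norm (coord B x n) \<le> tn B x"
  using tn_ge[OF U x, of "{n}"] by simp

lemma tn_norm:
  assumes U: "unconditional_fdd B" and x: "x \<in> cspan B"
  shows "norm x \<le> tn B x"
proof -
  have fdd: "is_fdd B" using U unconditional_fdd_def by blast
  have "(\<lambda>N. norm (\<Sum>n<N. coord B x n)) \<longlonglongrightarrow> norm x"
    using coord(2)[OF fdd x] unfolding sums_def by (intro tendsto_norm)
  moreover have "norm (\<Sum>n<N. coord B x n) \<le> tn B x" for N by (rule tn_ge[OF U x]) simp
  ultimately show ?thesis by (intro LIMSEQ_le_const2) auto
qed

lemma tn_add:
  assumes U: "unconditional_fdd B" and x: "x \<in> cspan B" and y: "y \<in> cspan B"
  shows "tn B (x + y) \<le> tn B x + tn B y"
proof (rule tn_le)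
  have fdd: "is_fdd B" using U unconditional_fdd_def by blast
  fix S :: "nat set" assume S: "finite S"
  have "norm (\<Sum>n\<in>S. coord B (x + y) n) = norm ((\<Sum>n\<in>S. coord B x n) + (\<Sum>n\<in>S. coord B y n))"
    by (simp add: coord_add[OF fdd x y] sum.distrib)
  also have "\<dots> \<le> norm (\<Sum>n\<in>S. coord B x n) + norm (\<Sum>n\<in>S. coord B y n)" by (rule norm_triangle_ineq)
  also have "\<dots> \<le> tn B x + tn B y" using tn_ge[OF U x S] tn_ge[OF U y S] by simp
  finally show "norm (\<Sum>n\<in>S. coord B (x + y) n) \<le> tn B x + tn B y" .
qed

lemma tn_scale:
  assumes U: "unconditional_fdd B" and x: "x \<in> cspan B"
  shows "tn B (c *\<^sub>R x) \<le> \<bar>c\<bar> * tn B x"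
proof (rule tn_le)
  have fdd: "is_fdd B" using U unconditional_fdd_def by blast
  fix S :: "nat set" assume S: "finite S"
  have "norm (\<Sum>n\<in>S. coord B (c *\<^sub>R x) n) = \<bar>c\<bar> * norm (\<Sum>n\<in>S. coord B x n)"
    by (simp add: coord_scale[OF fdd x] scaleR_sum_right[symmetric])
  also have "\<dots> \<le> \<bar>c\<bar> * tn B x" using tn_ge[OF U x S] by (simp add: mult_left_mono)
  finally show "norm (\<Sum>n\<in>S. coord B (c *\<^sub>R x) n) \<le> \<bar>c\<bar> * tn B x" .
qed

lemma sums_in_closed_subspace:
  fixes V :: "'a::real_normed_vector set"
  assumes "closed V" "subspace V" "\<And>i. f i \<in> V" "f sums l"
  shows "l \<in> V"
proof -
  have "(\<lambda>m. \<Sum>i<m. f i) \<longlonglongrightarrow> l" using assms(4) by (simp add: sums_def)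
  moreover have "(\<Sum>i<m. f i) \<in> V" for m by (intro subspace_sum[OF assms(2)]) (use assms(3) in auto)
  ultimately show ?thesis using assms(1) unfolding closed_sequential_limits
    by (elim allE[of _ "\<lambda>m. \<Sum>i<m. f i"] allE[of _ l] impE) auto
qed

lemma fdd_closed: "is_fdd B \<Longrightarrow> closed (B n)"
  using fdd_D(3)[of B n] closed_span_finite by metis

lemma series_tn:
  fixes B :: "nat \<Rightarrow> 'a::banach set"
  assumes U: "unconditional_fdd B" and xs: "\<And>i. x i \<in> cspan B"
    and sm: "summable (\<lambda>i. tn B (x i))" and xy: "x sums y"
  shows "y \<in> cspan B" "\<And>S. finite S \<Longrightarrow> norm (\<Sum>n\<in>S. coord B y n) \<le> (\<Sum>i. tn B (x i))"
proof -
  have fdd: "is_fdd B" using U unconditional_fdd_def by blast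
  have cs: "summable (\<lambda>i. coord B (x i) n)" for n
    by (rule summable_comparison_test'[OF sm]) (rule tn_coord[OF U xs])
  define bn where "bn n = (\<Sum>i. coord B (x i) n)" for n
  have bnB: "bn n \<in> B n" for n
    unfolding bn_def
    by (rule sums_in_closed_subspace[OF fdd_closed[OF fdd] fdd_subspace[OF fdd]])
       (use coord(1)[OF fdd xs] cs in auto)
  have sumS: "(\<Sum>n\<in>S. bn n) = (\<Sum>i. \<Sum>n\<in>S. coord B (x i) n)" for S
    unfolding bn_def by (rule suminf_sum[symmetric]) (use cs in auto)
  define a where "a i N = norm ((\<Sum>n<N. coord B (x i) n) - x i)" for i N
  have a_lim: "(\<lambda>N. a i N) \<longlonglongrightarrow> 0" for i
  proof -
    have "(\<lambda>N. (\<Sum>n<N. coord B (x i) n) - x i) \<longlonglongrightarrow> x i - x i"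
      using coord(2)[OF fdd xs] unfolding sums_def by (intro tendsto_intros)
    then show ?thesis unfolding a_def using tendsto_norm_zero by fastforce
  qed
  have a_bd: "norm (a i N) \<le> 2 * tn B (x i)" for i N
  proof -
    have "a i N \<le> norm (\<Sum>n<N. coord B (x i) n) + norm (x i)" unfolding a_def by (rule norm_triangle_ineq4)
    also have "\<dots> \<le> tn B (x i) + tn B (x i)"
      using tn_ge[OF U xs, of "{..<N}" i] tn_norm[OF U xs, of i] by simp
    finally show ?thesis unfolding a_def by simp
  qed
  have sm2: "summable (\<lambda>i. 2 * tn B (x i))" using sm by (rule summable_mult)
  have "eventually (\<lambda>N. summable (\<lambda>k. norm (a k N))) sequentially \<and>
           summable (\<lambda>n. norm ((\<lambda>_. 0::real) n)) \<and>
           ((\<lambda>N. suminf (\<lambda>k. a k N)) \<longlonglongrightarrow> suminf (\<lambda>_. 0::real))"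
  proof (rule tannerys_theorem[OF a_lim _ sm2])
    show "\<forall>\<^sub>F (k, N) in sequentially \<times>\<^sub>F sequentially. norm (a k N) \<le> 2 * tn B (x k)"
      by (rule always_eventually) (use a_bd in auto)
  qed simp
  then have tl: "(\<lambda>N. \<Sum>i. a i N) \<longlonglongrightarrow> 0" by simp
  have smx: "summable x" using xy sums_summable by blast
  have pt: "norm ((\<Sum>n<N. bn n) - y) \<le> (\<Sum>i. a i N)" for N
  proof -
    have sa: "summable (\<lambda>i. a i N)"
      by (rule summable_comparison_test'[OF sm2]) (use a_bd in auto)
    have sP: "summable (\<lambda>i. \<Sum>n<N. coord B (x i) n)" using cs by (intro summable_sum) auto
    have "(\<Sum>n<N. bn n) - y = (\<Sum>i. \<Sum>n<N. coord B (x i) n) - (\<Sum>i. x i)"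
      using sumS[of "{..<N}"] sums_unique[OF xy] by simp
    also have "\<dots> = (\<Sum>i. (\<Sum>n<N. coord B (x i) n) - x i)" by (rule suminf_diff[OF sP smx])
    finally have "norm ((\<Sum>n<N. bn n) - y) = norm (\<Sum>i. (\<Sum>n<N. coord B (x i) n) - x i)" by simp
    also have "\<dots> \<le> (\<Sum>i. norm ((\<Sum>n<N. coord B (x i) n) - x i))"
      by (rule summable_norm) (use sa in \<open>simp add: a_def\<close>)
    finally show ?thesis by (simp add: a_def)
  qed
  have "(\<lambda>N. (\<Sum>n<N. bn n) - y) \<longlonglongrightarrow> 0"
    by (rule Lim_null_comparison[OF always_eventually tl]) (use pt in auto)
  then have "(\<lambda>N. ((\<Sum>n<N. bn n) - y) + y) \<longlonglongrightarrow> 0 + y" by (intro tendsto_add tendsto_const)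
  then have bsum: "bn sums y" by (simp add: sums_def)
  have cy: "coord B y = bn" by (rule coord_unique[OF fdd bnB bsum])
  show "y \<in> cspan B" by (rule sums_in_cspan[OF bnB bsum])
  fix S :: "nat set" assume S: "finite S"
  have sn: "summable (\<lambda>i. norm (\<Sum>n\<in>S. coord B (x i) n))"
    by (rule summable_comparison_test'[OF sm]) (use tn_ge[OF U xs S] in auto)
  have "norm (\<Sum>n\<in>S. coord B y n) = norm (\<Sum>i. \<Sum>n\<in>S. coord B (x i) n)" using cy sumS by simp
  also have "\<dots> \<le> (\<Sum>i. norm (\<Sum>n\<in>S. coord B (x i) n))" by (rule summable_norm[OF sn])
  also have "\<dots> \<le> (\<Sum>i. tn B (x i))" by (rule suminf_le[OF _ sn sm]) (rule tn_ge[OF U xs S])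
  finally show "norm (\<Sum>n\<in>S. coord B y n) \<le> (\<Sum>i. tn B (x i))" .
qed

lemma tn_zero:
  assumes U: "unconditional_fdd B"
  shows "tn B 0 \<le> 0"
proof (rule tn_le)
  have fdd: "is_fdd B" using U unconditional_fdd_def by blast
  fix S :: "nat set" show "norm (\<Sum>n\<in>S. coord B 0 n) \<le> 0" by (simp add: coord_zero[OF fdd])
qed

lemma baire_step:
  fixes B :: "nat \<Rightarrow> 'a::banach set"
  assumes U: "unconditional_fdd B"
  shows "\<exists>c\<ge>0. \<forall>z\<in>cspan B. \<exists>w\<in>cspan B. tn B w \<le> c * norm z \<and> norm (z - w) \<le> norm z / 2"
proof -
  have fdd: "is_fdd B" using U unconditional_fdd_def by blast
  let ?Y = "cspan B"
  have Ysub: "subspace ?Y" by (rule cspan_subspace)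
  define F where "F k = {x \<in> ?Y. tn B x \<le> real k}" for k :: nat
  have cover: "?Y \<subseteq> (\<Union>k. F k)"
  proof
    fix x assume x: "x \<in> ?Y"
    have "tn B x \<le> real (nat \<lceil>tn B x\<rceil>)" by linarith
    then show "x \<in> (\<Union>k. F k)" using x unfolding F_def by blast
  qed
  have Yne: "?Y \<noteq> {}" using subspace_0[OF Ysub] by blast
  obtain k x0 r where r: "r > 0" "x0 \<in> ?Y" and cl: "\<And>z. z \<in> ?Y \<Longrightarrow> dist x0 z < r \<Longrightarrow> z \<in> closure (F k)"
    using baire_nonmeagre[OF fdd_D(1)[OF fdd] Yne cover] unfolding F_def by blast
  define c where "c = 4 * real k / r"
  have c0: "c \<ge> 0" unfolding c_def using r by simp
  have "\<exists>w\<in>?Y. tn B w \<le> c * norm z \<and> norm (z - w) \<le> norm z / 2" if z: "z \<in> ?Y" for z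
  proof (cases "z = 0")
    case True
    then show ?thesis using tn_zero[OF U] subspace_0[OF Ysub] by (intro bexI[of _ 0]) auto
  next
    case False
    then have nz: "norm z > 0" by simp
    define l where "l = r / (2 * norm z)"
    have l0: "l > 0" unfolding l_def using r nz by simp
    define y' where "y' = l *\<^sub>R z"
    have y'Y: "y' \<in> ?Y" unfolding y'_def using z Ysub subspace_scale by blast
    have ny': "norm y' = r / 2" unfolding y'_def l_def using nz r by simp
    have x1: "x0 + y' \<in> closure (F k)"
      by (rule cl) (use r y'Y Ysub subspace_add ny' in \<open>auto simp: dist_norm\<close>)
    have x2: "x0 \<in> closure (F k)" by (rule cl) (use r in auto)
    obtain w1 where w1: "w1 \<in> F k" "dist w1 (x0 + y') < r / 8"
      using x1 r unfolding closure_approachable by (meson divide_pos_pos zero_less_numeral)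
    obtain w2 where w2: "w2 \<in> F k" "dist w2 x0 < r / 8"
      using x2 r unfolding closure_approachable by (meson divide_pos_pos zero_less_numeral)
    have w1Y: "w1 \<in> ?Y" and w2Y: "w2 \<in> ?Y" using w1 w2 unfolding F_def by auto
    define w' where "w' = w1 - w2"
    have w'Y: "w' \<in> ?Y" unfolding w'_def using w1Y w2Y Ysub subspace_diff by blast
    have tnw': "tn B w' \<le> 2 * real k"
    proof -
      have m: "- w2 \<in> ?Y" using w2Y Ysub subspace_neg by blast
      have "tn B w' \<le> tn B w1 + tn B (- w2)" unfolding w'_def using tn_add[OF U w1Y m] by simp
      also have "tn B (- w2) \<le> tn B w2" using tn_scale[OF U w2Y, of "-1"] by simp
      finally show ?thesis using w1 w2 unfolding F_def by simp
    qed
    have nyw: "norm (y' - w') \<le> r / 4"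
    proof -
      have "y' - w' = (x0 + y' - w1) - (x0 - w2)" unfolding w'_def by (simp add: algebra_simps)
      then have "norm (y' - w') \<le> norm (x0 + y' - w1) + norm (x0 - w2)"
        using norm_triangle_ineq4 by metis
      also have "\<dots> \<le> r / 8 + r / 8" using w1(2) w2(2) by (simp add: dist_norm norm_minus_commute)
      finally show ?thesis by simp
    qed
    define w where "w = (1 / l) *\<^sub>R w'"
    have wY: "w \<in> ?Y" unfolding w_def using w'Y Ysub subspace_scale by blast
    have "tn B w \<le> (1 / l) * tn B w'" unfolding w_def using tn_scale[OF U w'Y, of "1 / l"] l0 by simp
    also have "\<dots> \<le> (1 / l) * (2 * real k)" using tnw' l0 by (intro mult_left_mono) auto
    also have "\<dots> = c * norm z" unfolding c_def l_def using nz r by (simp add: field_simps)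
    finally have tw: "tn B w \<le> c * norm z" .
    have "z - w = (1 / l) *\<^sub>R (y' - w')" unfolding w_def y'_def using l0 by (simp add: algebra_simps)
    then have "norm (z - w) = (1 / l) * norm (y' - w')" using l0 by simp
    also have "\<dots> \<le> (1 / l) * (r / 4)" using nyw l0 by (intro mult_left_mono) auto
    also have "\<dots> = norm z / 2" unfolding l_def using nz r by (simp add: field_simps)
    finally show ?thesis using wY tw by blast
  qed
  then show ?thesis using c0 by blast
qed

lemma tn_bound:
  fixes B :: "nat \<Rightarrow> 'a::banach set"
  assumes U: "unconditional_fdd B"
  shows "\<exists>c\<ge>0. \<forall>y\<in>cspan B. \<forall>S. finite S \<longrightarrow> norm (\<Sum>n\<in>S. coord B y n) \<le> c * norm y"
proof -
  have fdd: "is_fdd B" using U unconditional_fdd_def by blast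
  let ?Y = "cspan B"
  have Ysub: "subspace ?Y" by (rule cspan_subspace)
  obtain c where c0: "c \<ge> 0" and st0: "\<forall>z\<in>?Y. \<exists>w\<in>?Y. tn B w \<le> c * norm z \<and> norm (z - w) \<le> norm z / 2"
    using baire_step[OF U] by blast
  have "\<forall>z. \<exists>w. z \<in> ?Y \<longrightarrow> w \<in> ?Y \<and> tn B w \<le> c * norm z \<and> norm (z - w) \<le> norm z / 2"
    using st0 by blast
  then obtain st where st: "\<And>z. z \<in> ?Y \<Longrightarrow> st z \<in> ?Y \<and> tn B (st z) \<le> c * norm z \<and> norm (z - st z) \<le> norm z / 2"
    by metis
  have "norm (\<Sum>n\<in>S. coord B y n) \<le> (2 * c) * norm y" if y: "y \<in> ?Y" and S: "finite S" for y S
  proof -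
    define zs where "zs i = ((\<lambda>z. z - st z) ^^ i) y" for i
    have zsS: "zs (Suc i) = zs i - st (zs i)" for i unfolding zs_def by simp
    have zsY: "zs i \<in> ?Y \<and> norm (zs i) \<le> norm y / 2 ^ i" for i
    proof (induction i)
      case 0 then show ?case using y by (simp add: zs_def)
    next
      case (Suc i)
      then have "zs (Suc i) \<in> ?Y" using st[of "zs i"] zsS Ysub subspace_diff by metis
      moreover have "norm (zs (Suc i)) \<le> norm y / 2 ^ Suc i"
      proof -
        have "norm (zs (Suc i)) \<le> norm (zs i) / 2" using st[of "zs i"] Suc unfolding zsS by blast
        also have "\<dots> \<le> (norm y / 2 ^ i) / 2" using Suc by (intro divide_right_mono) auto
        finally show ?thesis by simp
      qed
      ultimately show ?case by blast
    qed
    define w where "w i = st (zs i)" for i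
    have wY: "w i \<in> ?Y" for i unfolding w_def using st zsY by blast
    have tw: "tn B (w i) \<le> c * norm y * (1/2) ^ i" for i
    proof -
      have "tn B (w i) \<le> c * norm (zs i)" unfolding w_def using st zsY by blast
      also have "\<dots> \<le> c * (norm y / 2 ^ i)" using zsY c0 by (intro mult_left_mono) auto
      finally show ?thesis by (simp add: power_divide field_simps)
    qed
    have part: "(\<Sum>i<m. w i) = y - zs m" for m
      by (induction m) (simp_all add: zs_def[of 0] zsS w_def)
    have "(\<lambda>m. zs m) \<longlonglongrightarrow> 0"
    proof (rule Lim_null_comparison[OF always_eventually])
      show "\<forall>m. norm (zs m) \<le> norm y * (1/2) ^ m" using zsY by (simp add: power_divide)
      show "(\<lambda>m. norm y * (1/2::real) ^ m) \<longlonglongrightarrow> 0"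
        by (intro tendsto_mult_right_zero LIMSEQ_power_zero) simp
    qed
    then have "(\<lambda>m. y - zs m) \<longlonglongrightarrow> y - 0" by (intro tendsto_diff tendsto_const)
    then have wsum: "w sums y" using part by (simp add: sums_def)
    have sg: "summable (\<lambda>i. c * norm y * (1/2::real) ^ i)"
      by (intro summable_mult summable_geometric) simp
    have stn: "summable (\<lambda>i. tn B (w i))"
      by (rule summable_comparison_test'[OF sg]) (use tw tn_nonneg[OF U wY] in auto)
    have "norm (\<Sum>n\<in>S. coord B y n) \<le> (\<Sum>i. tn B (w i))"
      by (rule series_tn(2)[OF U wY stn wsum S])
    also have "\<dots> \<le> (\<Sum>i. c * norm y * (1/2::real) ^ i)" by (rule suminf_le[OF tw stn sg])
    also have "\<dots> = c * norm y * 2"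
      using suminf_mult[OF summable_geometric[of "1/2::real"]] suminf_geometric[of "1/2::real"] by simp
    finally show ?thesis by simp
  qed
  then show ?thesis using c0 by (intro exI[of _ "2 * c"]) auto
qed

lemma uncond_const:
  fixes B :: "nat \<Rightarrow> 'a::banach set"
  assumes U: "unconditional_fdd B"
  shows "\<exists>K\<ge>1. \<forall>M b S. (\<forall>n. b n \<in> B n) \<longrightarrow> S \<subseteq> {..<M} \<longrightarrow>
            norm (\<Sum>n\<in>S. b n) \<le> K * norm (\<Sum>n<M. b n)"
proof -
  have fdd: "is_fdd B" using U unconditional_fdd_def by blast
  obtain c where c: "c \<ge> 0" "\<And>y S. y \<in> cspan B \<Longrightarrow> finite S \<Longrightarrow> norm (\<Sum>n\<in>S. coord B y n) \<le> c * norm y"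
    using tn_bound[OF U] by blast
  have "norm (\<Sum>n\<in>S. b n) \<le> max 1 c * norm (\<Sum>n<M. b n)"
    if b: "\<forall>n. b n \<in> B n" and S: "S \<subseteq> {..<M}" for M b S
  proof -
    define b' where "b' n = (if n < M then b n else 0)" for n
    have b'B: "b' n \<in> B n" for n unfolding b'_def using b subspace_0[OF fdd_subspace[OF fdd]] by auto
    have ysum: "(\<Sum>n<M. b n) = (\<Sum>n<M. b' n)" unfolding b'_def by simp
    have cy: "coord B (\<Sum>n<M. b n) = b'" unfolding ysum by (rule coord_finite[OF fdd b'B]) (simp add: b'_def)
    have yY: "(\<Sum>n<M. b n) \<in> cspan B"
      by (intro subspace_sum[OF cspan_subspace]) (use b Fs_sub_cspan in blast)
    have fS: "finite S" using S finite_subset by blast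
    have "(\<Sum>n\<in>S. b n) = (\<Sum>n\<in>S. coord B (\<Sum>n<M. b n) n)" unfolding cy b'_def using S by (intro sum.cong) auto
    then have "norm (\<Sum>n\<in>S. b n) \<le> c * norm (\<Sum>n<M. b n)" using c(2)[OF yY fS] by simp
    also have "\<dots> \<le> max 1 c * norm (\<Sum>n<M. b n)" by (intro mult_right_mono) auto
    finally show ?thesis .
  qed
  then show ?thesis by (intro exI[of _ "max 1 c"]) auto
qed

lemma span_union_subspaces:
  assumes I: "finite I" and sub: "\<And>n. subspace (B n)"
    and x: "x \<in> span (\<Union>n\<in>I. B n)"
  shows "\<exists>\<beta>. (\<forall>n. \<beta> n \<in> B n) \<and> x = (\<Sum>n\<in>I. \<beta> n)"
  using I x
proof (induction I arbitrary: x rule: finite_induct)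
  case empty
  then show ?case using sub subspace_0 by (intro exI[of _ "\<lambda>_. 0"]) auto
next
  case (insert i I)
  have "x \<in> span (B i \<union> (\<Union>n\<in>I. B n))" using insert(4) by simp
  then obtain a y where a: "a \<in> span (B i)" and y: "y \<in> span (\<Union>n\<in>I. B n)" and xe: "x = a + y"
    unfolding span_Un by blast
  obtain \<beta> where \<beta>: "\<forall>n. \<beta> n \<in> B n" "y = (\<Sum>n\<in>I. \<beta> n)" using insert(3)[OF y] by blast
  have aB: "a \<in> B i" using a sub span_eq_iff by blast
  define \<gamma> where "\<gamma> = \<beta>(i := a)"
  have "(\<Sum>n\<in>I. \<gamma> n) = (\<Sum>n\<in>I. \<beta> n)" unfolding \<gamma>_def using insert(2) by (intro sum.cong) auto
  then have "x = (\<Sum>n\<in>insert i I. \<gamma> n)" using insert(1,2) xe \<beta>(2) by (simp add: \<gamma>_def)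
  moreover have "\<forall>n. \<gamma> n \<in> B n" using \<beta>(1) aB by (simp add: \<gamma>_def)
  ultimately show ?case by blast
qed

lemma span_UN_span: "span (\<Union>n\<in>I. span (S n)) = span (\<Union>n\<in>I. S n)"
proof (rule subset_antisym)
  have "(\<Union>n\<in>I. span (S n)) \<subseteq> span (\<Union>n\<in>I. S n)"
    using span_mono[of "S _" "\<Union>n\<in>I. S n"] by blast
  then show "span (\<Union>n\<in>I. span (S n)) \<subseteq> span (\<Union>n\<in>I. S n)"
    using span_mono span_span by blast
  show "span (\<Union>n\<in>I. S n) \<subseteq> span (\<Union>n\<in>I. span (S n))"
    by (rule span_mono) (use span_superset in blast)
qed

lemma block_uncond:
  fixes B :: "nat \<Rightarrow> 'a::real_normed_vector set" and m :: nat
  assumes K: "\<forall>M b S. (\<forall>n. b n \<in> B n) \<longrightarrow> S \<subseteq> {..<M} \<longrightarrow> norm (\<Sum>n\<in>S. b n) \<le> K * norm (\<Sum>n<M. b n)"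
    and sub: "\<And>n. subspace (B n)"
    and I: "\<And>j. j < m \<Longrightarrow> I j \<subseteq> {..<M}"
    and disj: "\<And>i j. i < m \<Longrightarrow> j < m \<Longrightarrow> i \<noteq> j \<Longrightarrow> I i \<inter> I j = {}"
    and \<beta>: "\<And>j n. \<beta> j n \<in> B n"
    and xs: "\<And>j. j < m \<Longrightarrow> xs j = (\<Sum>n\<in>I j. \<beta> j n)"
    and T: "T \<subseteq> {..<m}"
  shows "norm (\<Sum>j\<in>T. xs j) \<le> K * norm (\<Sum>j<m. xs j)"
proof -
  define b where "b n = (\<Sum>j<m. if n \<in> I j then \<beta> j n else 0)" for n
  have bB: "b n \<in> B n" for n
    unfolding b_def by (intro subspace_sum[OF sub]) (auto simp: \<beta> subspace_0[OF sub])
  define S' where "S' = (\<Union>j\<in>T. I j)"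
  have S'M: "S' \<subseteq> {..<M}" unfolding S'_def using I T by blast
  have fI: "finite (I j)" if "j < m" for j using I[OF that] finite_subset by blast
  have "(\<Sum>n<M. b n) = (\<Sum>j<m. \<Sum>n<M. if n \<in> I j then \<beta> j n else 0)"
    unfolding b_def by (rule sum.swap)
  also have "\<dots> = (\<Sum>j<m. \<Sum>n\<in>{..<M} \<inter> I j. \<beta> j n)"
    by (rule sum.cong[OF refl]) (simp add: sum.inter_restrict)
  also have "\<dots> = (\<Sum>j<m. xs j)"
    by (rule sum.cong[OF refl]) (use I xs in \<open>auto simp: Int_absorb1\<close>)
  finally have e1: "(\<Sum>n<M. b n) = (\<Sum>j<m. xs j)" .
  have fS': "finite S'" using S'M finite_subset by blast
  have "(\<Sum>n\<in>S'. b n) = (\<Sum>j<m. \<Sum>n\<in>S'. if n \<in> I j then \<beta> j n else 0)"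
    unfolding b_def by (rule sum.swap)
  also have "\<dots> = (\<Sum>j<m. \<Sum>n\<in>S' \<inter> I j. \<beta> j n)"
    by (rule sum.cong[OF refl]) (simp add: sum.inter_restrict[OF fS'])
  also have "\<dots> = (\<Sum>j<m. if j \<in> T then xs j else 0)"
  proof (rule sum.cong[OF refl])
    fix j assume j: "j \<in> {..<m}"
    show "(\<Sum>n\<in>S' \<inter> I j. \<beta> j n) = (if j \<in> T then xs j else 0)"
    proof (cases "j \<in> T")
      case True
      then have "S' \<inter> I j = I j" unfolding S'_def by blast
      then show ?thesis using True xs j by simp
    next
      case False
      have "S' \<inter> I j = {}" unfolding S'_def using disj j T False by blast
      then show ?thesis using False by simp
    qed
  qed
  also have "\<dots> = (\<Sum>j\<in>T. xs j)"
  proof -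
    have "{..<m} \<inter> T = T" using T by blast
    then show ?thesis using sum.inter_restrict[OF finite_lessThan[of m], of xs T] by simp
  qed
  finally have e2: "(\<Sum>n\<in>S'. b n) = (\<Sum>j\<in>T. xs j)" .
  show ?thesis using K bB S'M e1 e2 by metis
qed

lemma geom_half_sum: "(\<Sum>j<m. (1/2::real) ^ j) \<le> 2"
proof -
  have "(\<Sum>j<m. (1/2::real) ^ j) \<le> (\<Sum>j. (1/2::real) ^ j)"
    by (rule sum_le_suminf) (auto intro: summable_geometric)
  also have "\<dots> = 2" using suminf_geometric[of "1/2::real"] by simp
  finally show ?thesis .
qed

lemma blocking_sub: "blocking B k j \<subseteq> cspan B"
proof -
  have "blocking B k j \<subseteq> span (\<Union>n. B n)" unfolding blocking_def by (rule span_mono) blast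
  then show ?thesis using cspan_sub by blast
qed

lemma main_estimate:
  fixes C B :: "nat \<Rightarrow> 'a::banach_lattice set"
  assumes C: "absolute_fdd C" and U: "unconditional_fdd B" and BC: "cspan B \<subseteq> cspan C"
    and K1: "K \<ge> 1"
    and K: "\<forall>M b S. (\<forall>n. b n \<in> B n) \<longrightarrow> S \<subseteq> {..<M} \<longrightarrow> norm (\<Sum>n\<in>S. b n) \<le> K * norm (\<Sum>n<M. b n)"
    and k: "strict_mono k" and P: "mono P"
    and head: "\<And>j x. x \<in> blocking B k j \<Longrightarrow> norm (Qp C (P j) x) \<le> (1/2)^j * norm x"
    and tail: "\<And>j x. x \<in> blocking B k j \<Longrightarrow> norm (x - Qp C (P (Suc (Suc j))) x) \<le> (1/2)^j * norm x"
    and xs: "\<And>j. xs j \<in> blocking B k j"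
  shows "norm (\<Sum>j<m. labs (xs j)) \<le> (10 * abs_const C * K + 4 * K) * norm (\<Sum>j<m. xs j)"
proof -
  have fddB: "is_fdd B" using U unconditional_fdd_def by blast
  have fddC: "is_fdd C" using C absolute_fdd_def by blast
  define A where "A = abs_const C"
  have A1: "A \<ge> 1" unfolding A_def by (rule abs_const(1)[OF C])
  define s where "s = (\<Sum>j<m. xs j)"
  define I where "I j = {k j..<k (Suc j)}" for j
  have subB: "subspace (B n)" for n by (rule fdd_subspace[OF fddB])
  have "\<forall>j. \<exists>\<beta>. (\<forall>n. \<beta> n \<in> B n) \<and> xs j = (\<Sum>n\<in>I j. \<beta> n)"
  proof
    fix j
    show "\<exists>\<beta>. (\<forall>n. \<beta> n \<in> B n) \<and> xs j = (\<Sum>n\<in>I j. \<beta> n)"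
      by (rule span_union_subspaces[OF _ subB]) (use xs[of j] in \<open>auto simp: I_def blocking_def\<close>)
  qed
  then obtain \<beta> where \<beta>: "\<And>j n. \<beta> j n \<in> B n" "\<And>j. xs j = (\<Sum>n\<in>I j. \<beta> j n)" by metis
  have Isub: "I j \<subseteq> {..<k m}" if "j < m" for j
    unfolding I_def using strict_mono_less_eq[OF k, of "Suc j" m] that by auto
  have Idisj: "I i \<inter> I j = {}" if "i \<noteq> j" for i j
  proof -
    have "k (Suc i) \<le> k j \<or> k (Suc j) \<le> k i"
      using that strict_mono_less_eq[OF k] by (cases "i < j") auto
    then show ?thesis unfolding I_def by auto
  qed
  have buc: "norm (\<Sum>j\<in>T. xs j) \<le> K * norm s" if "T \<subseteq> {..<m}" for T
    unfolding s_def by (rule block_uncond[OF K subB Isub Idisj \<beta>(1) \<beta>(2) that])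
  have xn: "norm (xs j) \<le> K * norm s" if "j < m" for j using buc[of "{j}"] that by simp
  have xZ: "xs j \<in> cspan C" for j using xs[of j] blocking_sub BC by blast
  define E where "E j = {P j..<P (Suc (Suc j))}" for j
  define u where "u j = (\<Sum>n\<in>E j. coord C (xs j) n)" for j
  define e where "e j = xs j - u j" for j
  have ueq: "u j = Qp C (P (Suc (Suc j))) (xs j) - Qp C (P j) (xs j)" for j
  proof -
    have le: "P j \<le> P (Suc (Suc j))" using P by (simp add: monoD)
    have "Qp C (P (Suc (Suc j))) (xs j) = (\<Sum>n\<in>{0..<P j}. coord C (xs j) n) + u j"
      unfolding Qp_def u_def E_def lessThan_atLeast0
      using sum.atLeastLessThan_concat[OF _ le, of 0 "coord C (xs j)"] by simp
    then show ?thesis unfolding Qp_def lessThan_atLeast0 by simp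
  qed
  have en: "norm (e j) \<le> 2 * ((1/2)^j * norm (xs j))" for j
  proof -
    have "e j = (xs j - Qp C (P (Suc (Suc j))) (xs j)) + Qp C (P j) (xs j)"
      unfolding e_def ueq by simp
    then have "norm (e j) \<le> norm (xs j - Qp C (P (Suc (Suc j))) (xs j)) + norm (Qp C (P j) (xs j))"
      by (metis norm_triangle_ineq)
    also have "\<dots> \<le> (1/2)^j * norm (xs j) + (1/2)^j * norm (xs j)"
      by (intro add_mono tail head xs)
    also have "(1/2)^j * norm (xs j) + (1/2)^j * norm (xs j) = 2 * ((1/2::real)^j * norm (xs j))"
      by (rule mult_2[symmetric])
    finally show ?thesis .
  qed
  have esum: "(\<Sum>j<m. norm (e j)) \<le> 4 * K * norm s"
  proof -
    have "(\<Sum>j<m. norm (e j)) \<le> (\<Sum>j<m. 2 * ((1/2)^j * (K * norm s)))"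
    proof (rule sum_mono)
      fix j assume "j \<in> {..<m}"
      then have "norm (xs j) \<le> K * norm s" using xn by simp
      then have "(1/2)^j * norm (xs j) \<le> (1/2)^j * (K * norm s)"
        by (intro mult_left_mono) auto
      then show "norm (e j) \<le> 2 * ((1/2)^j * (K * norm s))" using en[of j] by linarith
    qed
    also have "\<dots> = (2 * (K * norm s)) * (\<Sum>j<m. (1/2::real)^j)"
      by (simp add: sum_distrib_left mult_ac)
    also have "\<dots> \<le> (2 * (K * norm s)) * 2"
      using K1 by (intro mult_left_mono geom_half_sum) auto
    finally show ?thesis by simp
  qed
  define V where "V J = (\<Sum>j\<in>J. \<Sum>n\<in>E j. labs (coord C (xs j) n))" for J
  have par: "norm (V J) \<le> 5 * A * K * norm s"
    if J: "J \<subseteq> {..<m}" and sep: "\<And>i j. i \<in> J \<Longrightarrow> j \<in> J \<Longrightarrow> i < j \<Longrightarrow> Suc (Suc i) \<le> j" for J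
  proof -
    have fJ: "finite J" using J finite_subset by blast
    have EP: "E j \<subseteq> {..<P (Suc m)}" if "j \<in> J" for j
    proof -
      have "Suc (Suc j) \<le> Suc m" using J that by auto
      then have "P (Suc (Suc j)) \<le> P (Suc m)" using P by (simp add: monoD)
      then show ?thesis unfolding E_def by auto
    qed
    have Edisj: "E i \<inter> E j = {}" if "i \<in> J" "j \<in> J" "i \<noteq> j" for i j
    proof (cases "i < j")
      case True
      then have "P (Suc (Suc i)) \<le> P j" using sep that P by (simp add: monoD)
      then show ?thesis unfolding E_def by auto
    next
      case False
      then have "j < i" using that by simp
      then have "P (Suc (Suc j)) \<le> P i" using sep that P by (simp add: monoD)
      then show ?thesis unfolding E_def by auto
    qed
    have "norm (V J) \<le> A * norm (\<Sum>j\<in>J. \<Sum>n\<in>E j. coord C (xs j) n)"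
      unfolding V_def A_def
      by (rule disjoint_absolute[OF C fJ EP Edisj]) (use coord(1)[OF fddC xZ] in auto)
    also have "(\<Sum>j\<in>J. \<Sum>n\<in>E j. coord C (xs j) n) = (\<Sum>j\<in>J. xs j) - (\<Sum>j\<in>J. e j)"
      unfolding e_def u_def by (simp add: sum_subtractf)
    also have "norm \<dots> \<le> norm (\<Sum>j\<in>J. xs j) + norm (\<Sum>j\<in>J. e j)" by (rule norm_triangle_ineq4)
    also have "\<dots> \<le> K * norm s + 4 * K * norm s"
    proof (rule add_mono)
      show "norm (\<Sum>j\<in>J. xs j) \<le> K * norm s" by (rule buc[OF J])
      have "norm (\<Sum>j\<in>J. e j) \<le> (\<Sum>j\<in>J. norm (e j))" by (rule norm_sum)
      also have "\<dots> \<le> (\<Sum>j<m. norm (e j))" by (rule sum_mono2) (use J in auto)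
      finally show "norm (\<Sum>j\<in>J. e j) \<le> 4 * K * norm s" using esum by simp
    qed
    finally show ?thesis using A1 by (simp add: algebra_simps)
  qed
  define J0 where "J0 = {j \<in> {..<m}. even j}"
  define J1 where "J1 = {j \<in> {..<m}. odd j}"
  have sep0: "Suc (Suc i) \<le> j" if "i \<in> J0" "j \<in> J0" "i < j" for i j
    using that unfolding J0_def by auto presburger
  have sep1: "Suc (Suc i) \<le> j" if "i \<in> J1" "j \<in> J1" "i < j" for i j
    using that unfolding J1_def by auto presburger
  have V0: "norm (V J0) \<le> 5 * A * K * norm s" by (rule par[OF _ sep0]) (auto simp: J0_def)
  have V1: "norm (V J1) \<le> 5 * A * K * norm s" by (rule par[OF _ sep1]) (auto simp: J1_def)
  have split: "{..<m} = J0 \<union> J1" "J0 \<inter> J1 = {}" unfolding J0_def J1_def by auto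
  have lx: "labs (xs j) \<le> (\<Sum>n\<in>E j. labs (coord C (xs j) n)) + labs (e j)" for j
  proof -
    have "xs j = u j + e j" unfolding e_def by simp
    then have "labs (xs j) \<le> labs (u j) + labs (e j)" using labs_triangle by metis
    also have "labs (u j) \<le> (\<Sum>n\<in>E j. labs (coord C (xs j) n))" unfolding u_def by (rule labs_sum)
    finally show ?thesis by (simp add: add_right_mono)
  qed
  have "(\<Sum>j<m. labs (xs j)) \<le> (\<Sum>j<m. (\<Sum>n\<in>E j. labs (coord C (xs j) n)) + labs (e j))"
    by (rule sum_mono) (rule lx)
  also have "\<dots> = V {..<m} + (\<Sum>j<m. labs (e j))" unfolding V_def by (simp add: sum.distrib)
  also have "V {..<m} = V J0 + V J1" unfolding V_def split(1)
    by (rule sum.union_disjoint) (use split(2) in \<open>auto simp: J0_def J1_def\<close>)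
  finally have le1: "(\<Sum>j<m. labs (xs j)) \<le> V J0 + V J1 + (\<Sum>j<m. labs (e j))" .
  have "norm (\<Sum>j<m. labs (xs j)) \<le> norm (V J0 + V J1 + (\<Sum>j<m. labs (e j)))"
    by (rule norm_mono_pos[OF labs_sum_nonneg le1])
  also have "\<dots> \<le> norm (V J0) + norm (V J1) + norm (\<Sum>j<m. labs (e j))"
    using norm_triangle_ineq[of "V J0 + V J1" "\<Sum>j<m. labs (e j)"] norm_triangle_ineq[of "V J0" "V J1"]
    by linarith
  also have "norm (\<Sum>j<m. labs (e j)) \<le> (\<Sum>j<m. norm (e j))"
    using norm_sum[of "\<lambda>j. labs (e j)" "{..<m}"] by simp
  finally have "norm (\<Sum>j<m. labs (xs j)) \<le> norm (V J0) + norm (V J1) + (\<Sum>j<m. norm (e j))"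
    by simp
  also have "\<dots> \<le> 5 * A * K * norm s + 5 * A * K * norm s + 4 * K * norm s"
    by (intro add_mono V0 V1 esum)
  finally show ?thesis unfolding A_def s_def by (simp add: algebra_simps)
qed

primrec blkseq :: "(nat \<Rightarrow> nat \<Rightarrow> nat) \<Rightarrow> (nat \<Rightarrow> nat \<Rightarrow> nat \<Rightarrow> nat) \<Rightarrow> nat \<Rightarrow> nat \<times> nat \<times> nat" where
  "blkseq Nf Tf 0 = (0, 0, 0)"
| "blkseq Nf Tf (Suc j) = (let s = blkseq Nf Tf j; kj1 = max (Suc (fst s)) (Nf (Suc j) (snd (snd s)))
     in (kj1, snd (snd s), max (snd (snd s)) (Tf j (fst s) kj1)))"

definition kk where "kk Nf Tf j = fst (blkseq Nf Tf j)"
definition PP where "PP Nf Tf j = fst (snd (blkseq Nf Tf j))"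

lemma PP_Suc_eq: "PP Nf Tf (Suc j) = snd (snd (blkseq Nf Tf j))"
  unfolding PP_def by (simp add: Let_def)

lemma kk_0: "kk Nf Tf 0 = 0" and PP_0: "PP Nf Tf 0 = 0" and PP_1: "PP Nf Tf (Suc 0) = 0"
  unfolding kk_def PP_def by (simp_all add: Let_def)

lemma kk_Suc: "kk Nf Tf (Suc j) = max (Suc (kk Nf Tf j)) (Nf (Suc j) (PP Nf Tf (Suc j)))"
  unfolding kk_def PP_Suc_eq by (simp add: Let_def)

lemma PP_SS: "PP Nf Tf (Suc (Suc j)) = max (PP Nf Tf (Suc j)) (Tf j (kk Nf Tf j) (kk Nf Tf (Suc j)))"
  unfolding PP_Suc_eq kk_Suc by (simp add: Let_def kk_def PP_Suc_eq)

lemma block_index: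
  fixes k :: "nat \<Rightarrow> nat" and n :: nat
  assumes k: "strict_mono k" "k 0 = 0"
  shows "\<exists>j. k j \<le> n \<and> n < k (Suc j)"
proof (induction n)
  case 0
  then show ?case using k strict_monoD[OF k(1), of 0 1] by (intro exI[of _ 0]) auto
next
  case (Suc n)
  then obtain j where j: "k j \<le> n" "n < k (Suc j)" by blast
  show ?case
  proof (cases "Suc n < k (Suc j)")
    case True then show ?thesis using j by (intro exI[of _ j]) auto
  next
    case False
    then have "Suc n = k (Suc j)" using j by simp
    then show ?thesis using strict_monoD[OF k(1), of "Suc j" "Suc (Suc j)"] by (intro exI[of _ "Suc j"]) auto
  qed
qed

lemma cspan_blocking:
  assumes k: "strict_mono k" "k 0 = 0"
  shows "cspan (blocking B k) = cspan B"
proof -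
  have "span (\<Union>j. blocking B k j) = span (\<Union>n. B n)"
  proof (rule subset_antisym)
    have "(\<Union>j. blocking B k j) \<subseteq> span (\<Union>n. B n)"
      unfolding blocking_def using span_mono[of "\<Union>n\<in>{k _..<k (Suc _)}. B n" "\<Union>n. B n"] by blast
    then show "span (\<Union>j. blocking B k j) \<subseteq> span (\<Union>n. B n)"
      using span_mono span_span by blast
    have "(\<Union>n. B n) \<subseteq> (\<Union>j. blocking B k j)"
    proof
      fix x assume "x \<in> (\<Union>n. B n)"
      then obtain n where n: "x \<in> B n" by blast
      obtain j where j: "k j \<le> n" "n < k (Suc j)" using block_index[OF k] by blast
      then have "x \<in> blocking B k j" unfolding blocking_def using n span_superset by fastforce
      then show "x \<in> (\<Union>j. blocking B k j)" by blast
    qed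
    then show "span (\<Union>n. B n) \<subseteq> span (\<Union>j. blocking B k j)" by (rule span_mono)
  qed
  then show ?thesis unfolding cspan_def by simp
qed

lemma blocking_partial:
  fixes k :: "nat \<Rightarrow> nat"
  assumes k: "strict_mono k" "k 0 = 0"
  shows "(\<Sum>j<J. \<Sum>n\<in>{k j..<k (Suc j)}. c n) = (\<Sum>n<k J. c n)"
proof (induction J)
  case 0 then show ?case using k by simp
next
  case (Suc J)
  have le: "k J \<le> k (Suc J)" using strict_mono_less_eq[OF k(1)] by simp
  have "(\<Sum>n<k (Suc J). c n) = (\<Sum>n<k J. c n) + (\<Sum>n\<in>{k J..<k (Suc J)}. c n)"
    unfolding lessThan_atLeast0 using sum.atLeastLessThan_concat[OF _ le, of 0 c] by simp
  then show ?case using Suc by simp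
qed

theorem proposition4p7:
  fixes C B :: "nat \<Rightarrow> 'a::banach_lattice set"
  assumes "absolute_fdd C"
    and "unconditional_fdd B" and "shrinking_fdd B"
    and "cspan B \<subseteq> cspan C"
  shows "\<exists>k. strict_mono k \<and> k 0 = 0 \<and> absolute_fdd (blocking B k)"
proof -
  note C = assms(1) and U = assms(2) and sh = assms(3) and BC = assms(4)
  have fddB: "is_fdd B" using U unconditional_fdd_def by blast
  have fddC: "is_fdd C" using C absolute_fdd_def by blast
  define A where "A = abs_const C"
  have A1: "A \<ge> 1" unfolding A_def by (rule abs_const(1)[OF C])
  obtain K where K1: "K \<ge> 1" and K: "\<forall>M b S. (\<forall>n. b n \<in> B n) \<longrightarrow> S \<subseteq> {..<M} \<longrightarrow>
      norm (\<Sum>n\<in>S. b n) \<le> K * norm (\<Sum>n<M. b n)"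
    using uncond_const[OF U] by blast
  obtain SB where SB: "\<And>n. finite (SB n)" "\<And>n. B n = span (SB n)" using fdd_gens[OF fddB] by blast
  define Nf where "Nf j p = (SOME N. \<forall>n\<ge>N. \<forall>x\<in>span (\<Union>i\<in>{n..}. B i). norm (Qp C p x) \<le> (1/2)^j * norm x)"
    for j p
  have NfP: "\<forall>n\<ge>Nf j p. \<forall>x\<in>span (\<Union>i\<in>{n..}. B i). norm (Qp C p x) \<le> (1/2)^j * norm x" for j p
    unfolding Nf_def by (rule someI_ex[OF head_uniform[OF C sh BC]]) simp
  define Tf where "Tf j a b = (SOME T. \<forall>p\<ge>T. \<forall>x\<in>span (\<Union>n\<in>{a..<b}. SB n). norm (x - Qp C p x) \<le> (1/2)^j * norm x)"
    for j a b
  have spSB: "span (\<Union>n\<in>I. SB n) = span (\<Union>n\<in>I. B n)" for I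
    using span_UN_span[of SB I] SB(2) by simp
  have TfP: "\<forall>p\<ge>Tf j a b. \<forall>x\<in>span (\<Union>n\<in>{a..<b}. SB n). norm (x - Qp C p x) \<le> (1/2)^j * norm x" for j a b
    unfolding Tf_def
  proof (rule someI_ex[OF tail_uniform[OF C]])
    show "finite (\<Union>n\<in>{a..<b}. SB n)" using SB(1) by blast
    have "span (\<Union>n\<in>{a..<b}. B n) \<subseteq> cspan B"
      using span_mono[of "\<Union>n\<in>{a..<b}. B n" "\<Union>n. B n"] cspan_sub[of B] by blast
    then show "span (\<Union>n\<in>{a..<b}. SB n) \<subseteq> cspan C" using spSB BC by blast
  qed simp
  define k where "k = kk Nf Tf"
  define P where "P = PP Nf Tf"
  have k0: "k 0 = 0" unfolding k_def by (rule kk_0)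
  have kS: "k (Suc j) = max (Suc (k j)) (Nf (Suc j) (P (Suc j)))" for j
    unfolding k_def P_def by (rule kk_Suc)
  have PSS: "P (Suc (Suc j)) = max (P (Suc j)) (Tf j (k j) (k (Suc j)))" for j
    unfolding k_def P_def by (rule PP_SS)
  have P0: "P 0 = 0" "P (Suc 0) = 0" unfolding P_def by (rule PP_0, rule PP_1)
  have smk: "strict_mono k" unfolding strict_mono_Suc_iff using kS by (simp add: less_max_iff_disj)
  have monoP: "mono P"
    unfolding mono_iff_le_Suc
  proof
    fix n show "P n \<le> P (Suc n)" using P0 PSS by (cases n) auto
  qed
  have head: "norm (Qp C (P j) x) \<le> (1/2)^j * norm x" if x: "x \<in> blocking B k j" for j x
  proof (cases j)
    case 0 then show ?thesis using P0 by (simp add: Qp_def)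
  next
    case (Suc j')
    have "blocking B k j \<subseteq> span (\<Union>i\<in>{k j..}. B i)" unfolding blocking_def by (rule span_mono) auto
    moreover have "k j \<ge> Nf j (P j)" using kS[of j'] Suc by simp
    ultimately show ?thesis using NfP[of j "P j"] x by blast
  qed
  have tail: "norm (x - Qp C (P (Suc (Suc j))) x) \<le> (1/2)^j * norm x" if x: "x \<in> blocking B k j" for j x
  proof -
    have "x \<in> span (\<Union>n\<in>{k j..<k (Suc j)}. SB n)" using x spSB unfolding blocking_def by simp
    moreover have "P (Suc (Suc j)) \<ge> Tf j (k j) (k (Suc j))" using PSS by simp
    ultimately show ?thesis using TfP[of j "k j" "k (Suc j)"] by blast
  qed
  define A' where "A' = 10 * abs_const C * K + 4 * K"
  have "0 \<le> 10 * abs_const C * K" using A1 K1 unfolding A_def by simp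
  then have A'1: "A' \<ge> 1" unfolding A'_def using K1 by linarith
  have est: "norm (\<Sum>j<m. labs (xs j)) \<le> A' * norm (\<Sum>j<m. xs j)"
    if "\<forall>j. xs j \<in> blocking B k j" for m xs
    unfolding A'_def by (rule main_estimate[OF C U BC K1 K smk monoP head tail]) (use that in auto)
  have subBl: "subspace (blocking B k j)" for j unfolding blocking_def by (rule subspace_span)
  have "is_fdd (blocking B k)"
    unfolding is_fdd_def fdd_of_def
  proof (intro conjI allI ballI)
    show "closed (cspan (blocking B k))" unfolding cspan_def by simp
    show "subspace (cspan (blocking B k))" by (rule cspan_subspace)
    fix j
    show "\<exists>S. finite S \<and> blocking B k j = span S"
      using spSB SB(1) unfolding blocking_def by (intro exI[of _ "\<Union>n\<in>{k j..<k (Suc j)}. SB n"]) auto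
    show "blocking B k j \<subseteq> cspan (blocking B k)" by (rule Fs_sub_cspan)
  next
    fix x assume "x \<in> cspan (blocking B k)"
    then have x: "x \<in> cspan B" by (simp add: cspan_blocking[OF smk k0])
    define y where "y j = (\<Sum>n\<in>{k j..<k (Suc j)}. coord B x n)" for j
    have yB: "y j \<in> blocking B k j" for j
      unfolding y_def blocking_def
      by (intro span_sum span_base) (use coord(1)[OF fddB x] in blast)
    have "(\<lambda>N. \<Sum>n<N. coord B x n) \<longlonglongrightarrow> x" using coord(2)[OF fddB x] by (simp add: sums_def)
    then have "(\<lambda>J. \<Sum>n<k J. coord B x n) \<longlonglongrightarrow> x" using LIMSEQ_subseq_LIMSEQ[OF _ smk] by (simp add: o_def)
    then have ysum: "y sums x" unfolding sums_def y_def blocking_partial[OF smk k0] .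
    show "\<exists>!xs. (\<forall>n. xs n \<in> blocking B k n) \<and> xs sums x"
    proof (rule ex1I[of _ y])
      show "(\<forall>n. y n \<in> blocking B k n) \<and> y sums x" using yB ysum by blast
      fix z assume z: "(\<forall>n. z n \<in> blocking B k n) \<and> z sums x"
      define d where "d j = z j - y j" for j
      have dB: "\<forall>j. d j \<in> blocking B k j" unfolding d_def using z yB subBl subspace_diff by blast
      have "d sums (x - x)" unfolding d_def using z ysum by (intro sums_diff) auto
      then have dl: "(\<lambda>m. A' * norm (\<Sum>j<m. d j)) \<longlonglongrightarrow> A' * norm (0::'a)"
        unfolding sums_def by (intro tendsto_intros) simp
      have "norm (d i) \<le> 0" for i
      proof (rule LIMSEQ_le_const[OF dl[simplified]], intro exI allI impI)
        fix m assume m: "m \<ge> Suc i"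
        have "labs (d i) \<le> (\<Sum>j<m. labs (d j))" by (rule labs_le_sum) (use m in auto)
        then have "norm (labs (d i)) \<le> norm (\<Sum>j<m. labs (d j))" by (rule norm_mono_pos[OF labs_nonneg])
        also have "\<dots> \<le> A' * norm (\<Sum>j<m. d j)" by (rule est[OF dB])
        finally show "norm (d i) \<le> A' * norm (\<Sum>j<m. d j)" by simp
      qed
      then have "d i = 0" for i by simp
      then show "z = y" unfolding d_def by (simp add: fun_eq_iff)
    qed
  qed
  moreover have "\<exists>A\<ge>1. \<forall>m xs. (\<forall>n. xs n \<in> blocking B k n) \<longrightarrow>
      norm (\<Sum>n<m. labs (xs n)) \<le> A * norm (\<Sum>n<m. xs n)"
    using est A'1 by blast
  ultimately have "absolute_fdd (blocking B k)" unfolding absolute_fdd_def by blast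
  then show ?thesis using smk k0 by blast
qed

end
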